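(* Let $\alpha,\beta\ge-1/2$, $1<p<\infty$, and let $f$ be a sequence on $\mathbb{N}$ with only finitely many nonzero terms. Then \[ \lim_{r\to1^-}\|\mathcal{T}_rf-f\|_{\ell^p(\mathbb{N})}=0. \]
   Context: $\mathbb{N}=\{0,1,2,\dots\}$. $d\mu_{\alpha,\beta}(x)=(1-x)^\alpha(1+x)^\beta\,dx$ on $[-1,1]$; $p_n^{(\alpha,\beta)}$ are the orthonormal Jacobi polynomials (classical Jacobi polynomials $P_n^{(\alpha,\beta)}$ normalized in $L^2([-1,1],d\mu_{\alpha,\beta})$). For $0<r<1$ and a sequence $f$, $\mathcal{T}_rf=\mathcal{F}^{-1}_{\alpha,\beta}(\chi_{[-r,r]}\mathcal{F}_{\alpha,\beta}f)$, where $\mathcal{F}_{\alpha,\beta}f(x)=\sum_{k\ge0}f(k)p_k^{(\alpha,\beta)}(x)$ and $\mathcal{F}^{-1}_{\alpha,\beta}F(n)=\int_{-1}^1F\,p_n^{(\alpha,\beta)}\,d\mu_{\alpha,\beta}$; equivalently $\mathcal{T}_rf(n)=\sum_{m\ge0}f(m)\int_{-r}^r p_m^{(\alpha,\beta)}p_n^{(\alpha,\beta)}\,d\mu_{\alpha,\beta}$. *)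

theory Defs
  imports "HOL-Analysis.Analysis"
begin

definition jacobi_weight :: "real \<Rightarrow> real \<Rightarrow> real \<Rightarrow> real" where
  "jacobi_weight a b x = (1 - x) powr a * (1 + x) powr b"

definition jacobi_P :: "real \<Rightarrow> real \<Rightarrow> nat \<Rightarrow> real \<Rightarrow> real" where
  "jacobi_P a b n x =
     (\<Sum>s\<le>n. ((real n + a) gchoose (n - s)) * ((real n + b) gchoose s)
               * ((x - 1) / 2) ^ s * ((x + 1) / 2) ^ (n - s))"

definition jacobi_p :: "real \<Rightarrow> real \<Rightarrow> nat \<Rightarrow> real \<Rightarrow> real" where
  "jacobi_p a b n x =
     jacobi_P a b n x /
       sqrt (LINT y:{-1..1}|lborel. (jacobi_P a b n y)\<^sup>2 * jacobi_weight a b y)"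

definition jacobi_T :: "real \<Rightarrow> real \<Rightarrow> real \<Rightarrow> (nat \<Rightarrow> real) \<Rightarrow> nat \<Rightarrow> real" where
  "jacobi_T a b r f n =
     (\<Sum>m. f m * (LINT x:{-r..r}|lborel.
                     jacobi_p a b m x * jacobi_p a b n x * jacobi_weight a b x))"

text \<open>ell^p norm of a sequence (meaningful when the p-th powers are summable).\<close>
definition lp_norm :: "real \<Rightarrow> (nat \<Rightarrow> real) \<Rightarrow> real" where
  "lp_norm p g = (\<Sum>n. \<bar>g n\<bar> powr p) powr (1 / p)"

end

theory Submission
  imports Defs
begin

lemma gchoose_step: "of_nat (Suc k) * ((x::real) gchoose Suc k) = (x - of_nat k) * (x gchoose k)"
  using gbinomial_absorption[of k x] gbinomial_absorb_comp[of x k] by simp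

definition uu :: "real \<Rightarrow> real" where "uu x = (x-1)/2"
definition vv :: "real \<Rightarrow> real" where "vv x = (x+1)/2"

lemma uu_deriv: "(uu has_real_derivative 1/2) (at x within S)"
  unfolding uu_def[abs_def] by (auto intro!: derivative_eq_intros)
lemma vv_deriv: "(vv has_real_derivative 1/2) (at x within S)"
  unfolding vv_def[abs_def] by (auto intro!: derivative_eq_intros)

definition d1 :: "nat \<Rightarrow> nat \<Rightarrow> real \<Rightarrow> real" where
  "d1 s k x = (real s * (uu x^(s-1) * vv x^k) + real k * (uu x^s * vv x^(k-1))) / 2"

lemma deriv_uv:
  "((\<lambda>x. uu x^s * vv x^k) has_real_derivative d1 s k x) (at x within S)"
  unfolding d1_def
  by (rule DERIV_cong[OF DERIV_mult[OF DERIV_power[OF uu_deriv] DERIV_power[OF vv_deriv]]])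
     (simp add: algebra_simps)

definition d2 :: "nat \<Rightarrow> nat \<Rightarrow> real \<Rightarrow> real" where
  "d2 s k x = (real s * d1 (s-1) k x + real k * d1 s (k-1) x) / 2"

lemma deriv_d1:
  "(d1 s k has_real_derivative d2 s k x) (at x within S)"
  unfolding d2_def d1_def[abs_def]
  by (rule DERIV_cong[OF DERIV_cdivide[OF DERIV_add[OF DERIV_cmult[OF deriv_uv] DERIV_cmult[OF deriv_uv]]]])
     (simp add: d1_def algebra_simps)

lemma pow_pred: "(u::real) \<noteq> 0 \<Longrightarrow> real s * u^(s-1) = real s * u^s / u"
  by (cases s) auto

lemma pow_pred2: "(u::real) \<noteq> 0 \<Longrightarrow> real s * real (s-1) * u^(s-1-1) = real s * real (s-1) * u^s / u^2"
  by (cases s; cases "s - 1") (auto simp: power2_eq_square)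

lemma d1_alt: "uu x \<noteq> 0 \<Longrightarrow> vv x \<noteq> 0 \<Longrightarrow>
   d1 s k x = (uu x^s * vv x^k) * (real s / uu x + real k / vv x) / 2"
proof -
  assume u: "uu x \<noteq> 0" and v: "vv x \<noteq> 0"
  have "real s * (uu x^(s-1) * vv x^k) = (real s * uu x^(s-1)) * vv x^k" by simp
  also have "\<dots> = real s * uu x^s / uu x * vv x^k" using pow_pred[OF u] by simp
  finally have 1: "real s * (uu x^(s-1) * vv x^k) = (uu x^s * vv x^k) * (real s / uu x)" by simp
  have "real k * (uu x^s * vv x^(k-1)) = (real k * vv x^(k-1)) * uu x^s" by simp
  also have "\<dots> = real k * vv x^k / vv x * uu x^s" using pow_pred[OF v] by simp
  finally have 2: "real k * (uu x^s * vv x^(k-1)) = (uu x^s * vv x^k) * (real k / vv x)" by simp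
  show ?thesis unfolding d1_def 1 2 by (simp add: algebra_simps)
qed

lemma d2_alt: "uu x \<noteq> 0 \<Longrightarrow> vv x \<noteq> 0 \<Longrightarrow>
   d2 s k x = (uu x^s * vv x^k) * (real s * real (s-1) / (uu x)^2 + 2 * real s * real k / (uu x * vv x)
     + real k * real (k-1) / (vv x)^2) / 4"
proof -
  assume u: "uu x \<noteq> 0" and v: "vv x \<noteq> 0"
  have A: "real s * d1 (s-1) k x = (uu x^s * vv x^k) * (real s * real (s-1) / (uu x)^2 + real s * real k / (uu x * vv x)) / 2"
  proof (cases s)
    case 0 then show ?thesis by simp
  next
    case (Suc t)
    then show ?thesis using u v by (simp add: d1_alt field_simps power2_eq_square)
  qed
  have B: "real k * d1 s (k-1) x = (uu x^s * vv x^k) * (real s * real k / (uu x * vv x) + real k * real (k-1) / (vv x)^2) / 2"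
  proof (cases k)
    case 0 then show ?thesis by simp
  next
    case (Suc t)
    then show ?thesis using u v by (simp add: d1_alt field_simps power2_eq_square)
  qed
  show ?thesis unfolding d2_def A B by (simp add: field_simps)
qed

lemma ode_term:
  fixes a b x :: real
  assumes x: "-1 < x" "x < 1"
  shows "(1 - x^2) * d2 s k x + (b - a - (a+b+2)*x) * d1 s k x =
     - (uu x^s * vv x^k) * (real s * (real s + a) * vv x / uu x
         + (2 * real s * real k + (b+1) * real s + (a+1) * real k)
         + real k * (real k + b) * uu x / vv x)"
proof -
  have u: "uu x \<noteq> 0" and v: "vv x \<noteq> 0" using x by (auto simp: uu_def vv_def)
  have x1': "2 * uu x + 1 = x" and x2: "vv x = uu x + 1" by (auto simp: uu_def vv_def field_simps)
  have key: "\<And>E u w. u \<noteq> 0 \<Longrightarrow> w \<noteq> 0 \<Longrightarrow> w = u + 1 \<Longrightarrow>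
     (1 - (2*u+1)^2) * (E * (real s * real (s-1) / u^2 + 2 * real s * real k / (u * w)
     + real k * real (k-1) / w^2) / 4) + (b - a - (a+b+2)*(2*u+1)) * (E * (real s / u + real k / w) / 2)
     = - E * (real s * (real s + a) * w / u
         + (2 * real s * real k + (b+1) * real s + (a+1) * real k)
         + real k * (real k + b) * u / w)"
  proof -
    fix E u w :: real assume h: "u \<noteq> 0" "w \<noteq> 0" "w = u + 1"
    have s1: "real s * real (s-1) = real s * real s - real s" by (cases s) (auto simp: algebra_simps)
    have k1: "real k * real (k-1) = real k * real k - real k" by (cases k) (auto simp: algebra_simps)
    have "(1 - (2*u+1)^2) * (E * (real s * real (s-1) / u^2 + 2 * real s * real k / (u * w)
     + real k * real (k-1) / w^2) / 4) + (b - a - (a+b+2)*(2*u+1)) * (E * (real s / u + real k / w) / 2)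
     = (E / (u^2 * w^2)) * ((1 - (2*u+1)^2) * ((real s * real s - real s) * w^2 + 2 * real s * real k * u * w
        + (real k * real k - real k) * u^2) / 4 + (b - a - (a+b+2)*(2*u+1)) * (real s * w + real k * u) * u * w / 2)"
      unfolding s1 k1 using h(1,2) by (simp add: field_simps power2_eq_square)
    also have "\<dots> = (E / (u^2 * w^2)) * (- (real s * (real s + a) * w^3 * u
         + (2 * real s * real k + (b+1) * real s + (a+1) * real k) * u^2 * w^2
         + real k * (real k + b) * u^3 * w))"
    proof -
      have "((1 - (2*u+1)^2) * ((real s * real s - real s) * w^2 + 2 * real s * real k * u * w
        + (real k * real k - real k) * u^2) / 4 + (b - a - (a+b+2)*(2*u+1)) * (real s * w + real k * u) * u * w / 2)
        = (- (real s * (real s + a) * w^3 * u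
         + (2 * real s * real k + (b+1) * real s + (a+1) * real k) * u^2 * w^2
         + real k * (real k + b) * u^3 * w))"
        unfolding h(3) power2_eq_square power3_eq_cube
        apply (simp add: field_simps) apply (simp add: algebra_simps)? done
      then show ?thesis by simp
    qed
    also have "\<dots> = - E * (real s * (real s + a) * w / u
         + (2 * real s * real k + (b+1) * real s + (a+1) * real k)
         + real k * (real k + b) * u / w)"
      using h(1,2) by (simp add: field_simps power2_eq_square power3_eq_cube)
    finally show "?thesis E u w" .
  qed
  show ?thesis unfolding d1_alt[OF u v] d2_alt[OF u v]
    using key[OF u v x2, of "uu x^s * vv x^k", unfolded x1'] by simp
qed

locale jac =
  fixes a b :: real
  assumes a_ge: "a \<ge> -1/2" and b_ge: "b \<ge> -1/2"
begin

definition cc :: "nat \<Rightarrow> nat \<Rightarrow> real" where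
  "cc n s = ((real n + a) gchoose (n - s)) * ((real n + b) gchoose s)"

definition PP :: "nat \<Rightarrow> real \<Rightarrow> real" where "PP n = jacobi_P a b n"
definition DP :: "nat \<Rightarrow> real \<Rightarrow> real" where "DP n x = (\<Sum>s\<le>n. cc n s * d1 s (n-s) x)"
definition D2P :: "nat \<Rightarrow> real \<Rightarrow> real" where "D2P n x = (\<Sum>s\<le>n. cc n s * d2 s (n-s) x)"
definition lam :: "nat \<Rightarrow> real" where "lam n = real n * (real n + a + b + 1)"

lemma PP_eq: "PP n = (\<lambda>x. \<Sum>s\<le>n. cc n s * (uu x^s * vv x^(n-s)))"
  unfolding PP_def jacobi_P_def[abs_def] cc_def uu_def vv_def by (simp add: mult.assoc)

lemma PP_deriv: "(PP n has_real_derivative DP n x) (at x within S)"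
  unfolding PP_eq DP_def by (intro DERIV_sum DERIV_cmult deriv_uv)

lemma DP_deriv: "(DP n has_real_derivative D2P n x) (at x within S)"
  unfolding DP_def[abs_def] D2P_def by (intro DERIV_sum DERIV_cmult deriv_d1)

lemma cc_shift: "t < n \<Longrightarrow> cc n (Suc t) * (real (Suc t) * (real (Suc t) + a))
   = cc n t * (real (n - t) * (real (n - t) + b))"
proof -
  assume t: "t < n"
  have 1: "real (Suc t) * ((real n + b) gchoose Suc t) = (real n + b - real t) * ((real n + b) gchoose t)"
    using gchoose_step[of t "real n + b"] by simp
  have n1: "n - t = Suc (n - Suc t)" using t by simp
  have 2: "real (n - t) * ((real n + a) gchoose (n - t)) = (real (Suc t) + a) * ((real n + a) gchoose (n - Suc t))"
    unfolding n1 using gchoose_step[of "n - Suc t" "real n + a"] t by (simp add: of_nat_diff)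
  have "cc n (Suc t) * (real (Suc t) * (real (Suc t) + a)) =
     ((real (Suc t) + a) * ((real n + a) gchoose (n - Suc t))) * (real (Suc t) * ((real n + b) gchoose Suc t))"
    unfolding cc_def by (simp add: algebra_simps)
  also have "\<dots> = (real (n - t) * ((real n + a) gchoose (n - t))) * ((real n + b - real t) * ((real n + b) gchoose t))"
    unfolding 1 2 ..
  also have "\<dots> = cc n t * (real (n - t) * (real (n - t) + b))"
    unfolding cc_def using t by (simp add: of_nat_diff algebra_simps)
  finally show ?thesis .
qed

lemma ode:
  assumes x: "-1 < x" "x < 1"
  shows "(1 - x^2) * D2P n x + (b - a - (a+b+2)*x) * DP n x = - lam n * PP n x"
proof -
  have u: "uu x \<noteq> 0" and v: "vv x \<noteq> 0" using x by (auto simp: uu_def vv_def)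
  define e where "e s = uu x^s * vv x^(n-s)" for s
  define A where "A s = real s * (real s + a)" for s
  define B where "B s = real (n-s) * (real (n-s) + b)" for s
  define M where "M s = 2 * real s * real (n-s) + (b+1) * real s + (a+1) * real (n-s)" for s
  have "(1 - x^2) * D2P n x + (b - a - (a+b+2)*x) * DP n x =
     (\<Sum>s\<le>n. cc n s * ((1 - x^2) * d2 s (n-s) x + (b - a - (a+b+2)*x) * d1 s (n-s) x))"
  proof -
    have "(1 - x^2) * D2P n x + (b - a - (a+b+2)*x) * DP n x =
      (\<Sum>s\<le>n. (1 - x^2) * (cc n s * d2 s (n-s) x) + (b - a - (a+b+2)*x) * (cc n s * d1 s (n-s) x))"
      by (simp add: D2P_def DP_def sum_distrib_left sum.distrib)
    also have "\<dots> = (\<Sum>s\<le>n. cc n s * ((1 - x^2) * d2 s (n-s) x + (b - a - (a+b+2)*x) * d1 s (n-s) x))"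
      by (rule sum.cong) (auto simp: algebra_simps)
    finally show ?thesis .
  qed
  also have "\<dots> = - (\<Sum>s\<le>n. cc n s * A s * e s * vv x / uu x) - (\<Sum>s\<le>n. cc n s * M s * e s)
       - (\<Sum>s\<le>n. cc n s * B s * e s * uu x / vv x)"
  proof -
    have "(\<Sum>s\<le>n. cc n s * ((1 - x^2) * d2 s (n-s) x + (b - a - (a+b+2)*x) * d1 s (n-s) x))
       = (\<Sum>s\<le>n. - (cc n s * A s * e s * vv x / uu x) - cc n s * M s * e s - cc n s * B s * e s * uu x / vv x)"
    proof (rule sum.cong[OF refl])
      fix s assume "s \<in> {..n}"
      show "cc n s * ((1 - x^2) * d2 s (n-s) x + (b - a - (a+b+2)*x) * d1 s (n-s) x)
        = - (cc n s * A s * e s * vv x / uu x) - cc n s * M s * e s - cc n s * B s * e s * uu x / vv x"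
        unfolding ode_term[OF x] A_def B_def M_def e_def using u v by (simp add: field_simps)
    qed
    then show ?thesis by (simp add: sum_subtractf sum_negf)
  qed
  also have "(\<Sum>s\<le>n. cc n s * A s * e s * vv x / uu x) = (\<Sum>s\<le>n. cc n s * B s * e s)"
  proof (cases n)
    case 0 then show ?thesis by (simp add: A_def B_def)
  next
    case (Suc m)
    have "(\<Sum>s\<le>n. cc n s * A s * e s * vv x / uu x) = (\<Sum>t\<le>m. cc n (Suc t) * A (Suc t) * e (Suc t) * vv x / uu x)"
      unfolding Suc sum.atMost_Suc_shift by (simp add: A_def)
    also have "\<dots> = (\<Sum>t\<le>m. cc n t * B t * e t)"
    proof (rule sum.cong[OF refl])
      fix t assume "t \<in> {..m}"
      then have t: "t < n" using Suc by auto
      have E: "e (Suc t) * vv x / uu x = e t"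
        using t u v unfolding e_def by (simp add: field_simps Suc_diff_Suc[symmetric])
      have C: "cc n (Suc t) * A (Suc t) = cc n t * B t" using cc_shift[OF t] unfolding A_def B_def by simp
      have "cc n (Suc t) * A (Suc t) * e (Suc t) * vv x / uu x = (cc n (Suc t) * A (Suc t)) * (e (Suc t) * vv x / uu x)" by simp
      also have "\<dots> = cc n t * B t * e t" unfolding C E by simp
      finally show "cc n (Suc t) * A (Suc t) * e (Suc t) * vv x / uu x = cc n t * B t * e t" .
    qed
    also have "\<dots> = (\<Sum>s\<le>n. cc n s * B s * e s)"
      unfolding Suc sum.atMost_Suc by (simp add: B_def Suc)
    finally show ?thesis .
  qed
  also have "(\<Sum>s\<le>n. cc n s * B s * e s * uu x / vv x) = (\<Sum>s\<le>n. cc n s * A s * e s)"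
  proof (cases n)
    case 0 then show ?thesis by (simp add: A_def B_def)
  next
    case (Suc m)
    have "(\<Sum>s\<le>n. cc n s * B s * e s * uu x / vv x) = (\<Sum>t\<le>m. cc n t * B t * e t * uu x / vv x)"
      unfolding Suc sum.atMost_Suc by (simp add: B_def Suc)
    also have "\<dots> = (\<Sum>t\<le>m. cc n (Suc t) * A (Suc t) * e (Suc t))"
    proof (rule sum.cong[OF refl])
      fix t assume "t \<in> {..m}"
      then have t: "t < n" using Suc by auto
      have E: "e t * uu x / vv x = e (Suc t)"
        using t u v unfolding e_def by (simp add: field_simps Suc_diff_Suc[symmetric])
      have C: "cc n (Suc t) * A (Suc t) = cc n t * B t" using cc_shift[OF t] unfolding A_def B_def by simp
      have "cc n t * B t * e t * uu x / vv x = (cc n t * B t) * (e t * uu x / vv x)" by simp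
      also have "\<dots> = cc n (Suc t) * A (Suc t) * e (Suc t)" unfolding C[symmetric] E by simp
      finally show "cc n t * B t * e t * uu x / vv x = cc n (Suc t) * A (Suc t) * e (Suc t)" .
    qed
    also have "\<dots> = (\<Sum>s\<le>n. cc n s * A s * e s)"
      unfolding Suc sum.atMost_Suc_shift by (simp add: A_def)
    finally show ?thesis .
  qed
  finally have F: "(1 - x^2) * D2P n x + (b - a - (a+b+2)*x) * DP n x =
      - (\<Sum>s\<le>n. cc n s * B s * e s) - (\<Sum>s\<le>n. cc n s * M s * e s) - (\<Sum>s\<le>n. cc n s * A s * e s)" .
  have S: "(\<Sum>s\<le>n. cc n s * e s * (B s + M s + A s)) = (\<Sum>s\<le>n. cc n s * B s * e s) + (\<Sum>s\<le>n. cc n s * M s * e s) + (\<Sum>s\<le>n. cc n s * A s * e s)"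
    unfolding sum.distrib[symmetric] by (rule sum.cong) (auto simp: algebra_simps)
  have "(1 - x^2) * D2P n x + (b - a - (a+b+2)*x) * DP n x =
      - (\<Sum>s\<le>n. cc n s * e s * (B s + M s + A s))"
    unfolding F S by simp
  also have "\<dots> = - (\<Sum>s\<le>n. lam n * (cc n s * e s))"
  proof -
    have "B s + M s + A s = lam n" if "s \<le> n" for s
      unfolding A_def B_def M_def lam_def using that by (simp add: of_nat_diff algebra_simps)
    then show ?thesis by (auto intro!: sum.cong)
  qed
  also have "\<dots> = - lam n * PP n x"
    unfolding PP_eq e_def by (simp add: sum_distrib_left sum_negf)
  finally show ?thesis .
qed

end

lemma borel_to_leb: "f \<in> borel_measurable borel \<Longrightarrow> f \<in> borel_measurable (lebesgue_on S)"
proof -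
  assume f: "f \<in> borel_measurable borel"
  then have "f \<in> borel_measurable lborel" by simp
  then have "f \<in> borel_measurable lebesgue" by (rule measurable_completion)
  then show ?thesis by (rule measurable_restrict_space1)
qed


context jac begin

definition w :: "real \<Rightarrow> real" where "w = jacobi_weight a b"
definition WW :: "real \<Rightarrow> real" where "WW x = (1-x) powr (a+1) * (1+x) powr (b+1)"

lemma a_gt: "a > -1" and b_gt: "b > -1" using a_ge b_ge by auto

lemma w_nonneg: "0 \<le> w x" by (simp add: w_def jacobi_weight_def)

lemma WW_eq: assumes "x \<in> {-1..1}" shows "WW x = (1 - x^2) * w x"
proof (cases "x = 1 \<or> x = -1")
  case True then show ?thesis using a_gt b_gt by (auto simp: WW_def w_def jacobi_weight_def)
next
  case False
  then have "1 - x > 0" "1 + x > 0" using assms by auto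
  then have e1: "(1-x) powr (a+1) = (1-x) powr a * (1-x)" and e2: "(1+x) powr (b+1) = (1+x) powr b * (1+x)"
    by (simp_all add: powr_add)
  have "WW x = (1-x) powr a * (1-x) * ((1+x) powr b * (1+x))" unfolding WW_def e1 e2 by simp
  then show ?thesis by (simp add: w_def jacobi_weight_def power2_eq_square algebra_simps)
qed

lemma WW_end: "WW 1 = 0" "WW (-1) = 0" using a_gt b_gt by (auto simp: WW_def)

lemma WW_cont: "continuous_on {-1..1} WW"
  unfolding WW_def[abs_def] using a_gt b_gt
  by (intro continuous_intros continuous_on_powr') auto

lemma WW_deriv: assumes "-1 < x" "x < 1"
  shows "(WW has_real_derivative w x * (b - a - (a+b+2)*x)) (at x)"
proof -
  have p: "1 - x > 0" "1 + x > 0" using assms by auto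
  have D: "(WW has_real_derivative (1-x) powr (a+1) * ((b+1) * (1+x) powr (b+1 - real 1) * 1)
       + (a+1) * (1-x) powr (a+1 - real 1) * (-1) * (1+x) powr (b+1)) (at x)"
    unfolding WW_def[abs_def]
    by (rule DERIV_mult'[OF DERIV_fun_powr[of "\<lambda>x. 1-x" "-1" x "a+1"] DERIV_fun_powr[of "\<lambda>x. 1+x" 1 x "b+1"]])
       (use assms in \<open>auto intro!: derivative_eq_intros\<close>)
  have e1: "(1-x) powr (a+1) = (1-x) powr a * (1-x)" and e2: "(1+x) powr (b+1) = (1+x) powr b * (1+x)"
    using p by (simp_all add: powr_add)
  have "(1-x) powr (a+1) * ((b+1) * (1+x) powr (b+1 - real 1) * 1)
       + (a+1) * (1-x) powr (a+1 - real 1) * (-1) * (1+x) powr (b+1) = w x * (b - a - (a+b+2)*x)"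
    unfolding e1 e2 w_def jacobi_weight_def by (simp add: algebra_simps)
  with D show ?thesis by simp
qed

lemma w_meas: "w \<in> borel_measurable (lebesgue_on S)"
  unfolding w_def jacobi_weight_def[abs_def] by (rule borel_to_leb) measurable

lemma w_int: "w absolutely_integrable_on {-1..1}"
proof -
  define Ka where "Ka = 2 powr \<bar>a\<bar>"
  define Kb where "Kb = 2 powr \<bar>b\<bar>"
  have Kpos: "Ka > 0" "Kb > 0" by (auto simp: Ka_def Kb_def)
  have bnd: "\<bar>t powr c\<bar> \<le> 2 powr \<bar>c\<bar>" if "1 \<le> t" "t \<le> 2" for t c :: real
  proof -
    have "t powr c \<le> t powr \<bar>c\<bar>" using that by (intro powr_mono) auto
    also have "\<dots> \<le> 2 powr \<bar>c\<bar>" using that by (intro powr_mono2) auto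
    finally show ?thesis by simp
  qed
  define g where "g x = Kb * (1-x) powr a + Ka * (1+x) powr b" for x
  define H where "H x = - Kb * (1-x) powr (a+1) / (a+1) + Ka * (1+x) powr (b+1) / (b+1)" for x
  have le: "norm (w x) \<le> g x" if "x \<in> {-1..1}" for x
  proof (cases "x \<ge> 0")
    case True
    have "w x = (1-x) powr a * (1+x) powr b" by (simp add: w_def jacobi_weight_def)
    also have "\<dots> \<le> (1-x) powr a * Kb"
      using bnd[of "1+x" b] that True by (intro mult_left_mono) (auto simp: Kb_def abs_le_iff)
    also have "\<dots> \<le> g x" unfolding g_def using Kpos by simp
    finally show ?thesis using w_nonneg by simp
  next
    case False
    have "w x = (1-x) powr a * (1+x) powr b" by (simp add: w_def jacobi_weight_def)
    also have "\<dots> \<le> Ka * (1+x) powr b"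
      using bnd[of "1-x" a] that False by (intro mult_right_mono) (auto simp: Ka_def abs_le_iff)
    also have "\<dots> \<le> g x" unfolding g_def using Kpos by simp
    finally show ?thesis using w_nonneg by simp
  qed
  have "(g has_integral (H 1 - H (-1))) {-1..1}"
  proof (rule fundamental_theorem_of_calculus_interior)
    show "continuous_on {-1..1} H"
      unfolding H_def using a_gt b_gt by (intro continuous_intros continuous_on_powr') auto
    fix x :: real assume "x \<in> {-1<..<1}"
    then have p: "1 - x > 0" "1 + x > 0" by auto
    have "(H has_real_derivative g x) (at x)"
      unfolding H_def[abs_def] g_def using p a_gt b_gt
      apply (intro derivative_eq_intros DERIV_fun_powr[where m="-1"] DERIV_fun_powr[where m=1])
      by (auto intro!: derivative_eq_intros)
    then show "(H has_vector_derivative g x) (at x)"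
      by (simp add: has_real_derivative_iff_has_vector_derivative)
  qed auto
  then have gi: "g integrable_on {-1..1}" by blast
  show ?thesis
    by (rule measurable_bounded_by_integrable_imp_absolutely_integrable[OF w_meas _ gi le]) auto
qed

end

context jac begin

definition ok :: "(real \<Rightarrow> real) \<Rightarrow> bool" where
  "ok h \<longleftrightarrow> h \<in> borel_measurable (lebesgue_on {-1..1}) \<and> (\<exists>B. \<forall>x\<in>{-1..1}. \<bar>h x\<bar> \<le> B)"

lemma ok_aint: "ok h \<Longrightarrow> (\<lambda>x. h x * w x) absolutely_integrable_on {-1..1}"
  unfolding ok_def
  by (intro absolutely_integrable_bounded_measurable_product_real w_int) (auto simp: bounded_real)

lemma ok_int: "ok h \<Longrightarrow> (\<lambda>x. h x * w x) integrable_on {-1..1}"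
  using ok_aint absolutely_integrable_on_def by blast

lemma ok_cont: "continuous_on {-1..1} h \<Longrightarrow> ok h"
proof -
  assume c: "continuous_on {-1..1} h"
  have "compact (h ` {-1..1})" by (rule compact_continuous_image[OF c]) auto
  then have "bounded (h ` {-1..1})" by (rule compact_imp_bounded)
  then show ?thesis unfolding ok_def bounded_real
    using continuous_imp_measurable_on_sets_lebesgue[OF c] by auto
qed

lemma ok_add: "ok f \<Longrightarrow> ok g \<Longrightarrow> ok (\<lambda>x. f x + g x)"
  unfolding ok_def
proof (elim conjE exE, intro conjI)
  fix B C assume B: "\<forall>x\<in>{-1..1}. \<bar>f x\<bar> \<le> B" and C: "\<forall>x\<in>{-1..1}. \<bar>g x\<bar> \<le> C"
  show "\<exists>B. \<forall>x\<in>{-1..1}. \<bar>f x + g x\<bar> \<le> B"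
  proof (intro exI[of _ "B + C"] ballI)
    fix x assume "x \<in> {-1..1::real}"
    then have "\<bar>f x\<bar> \<le> B" "\<bar>g x\<bar> \<le> C" using B C by auto
    then show "\<bar>f x + g x\<bar> \<le> B + C" using abs_triangle_ineq[of "f x" "g x"] by linarith
  qed
qed auto

lemma ok_mult: "ok f \<Longrightarrow> ok g \<Longrightarrow> ok (\<lambda>x. f x * g x)"
  unfolding ok_def
proof (elim conjE exE, intro conjI)
  fix B C assume B: "\<forall>x\<in>{-1..1}. \<bar>f x\<bar> \<le> B" and C: "\<forall>x\<in>{-1..1}. \<bar>g x\<bar> \<le> C"
  show "\<exists>B. \<forall>x\<in>{-1..1}. \<bar>f x * g x\<bar> \<le> B"
  proof (intro exI[of _ "B * C"] ballI)
    fix x assume "x \<in> {-1..1::real}"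
    then have "\<bar>f x\<bar> \<le> B" "\<bar>g x\<bar> \<le> C" using B C by auto
    then show "\<bar>f x * g x\<bar> \<le> B * C" unfolding abs_mult by (intro mult_mono) auto
  qed
qed auto

lemma ok_const: "ok (\<lambda>x. c)"
  by (rule ok_cont) (intro continuous_intros)

lemma ok_cmult: "ok f \<Longrightarrow> ok (\<lambda>x. c * f x)"
  using ok_mult[OF ok_const] .

lemma ok_diff: "ok f \<Longrightarrow> ok g \<Longrightarrow> ok (\<lambda>x. f x - g x)"
  using ok_add[of f "\<lambda>x. (-1) * g x"] ok_cmult[of g "-1"] by simp

lemma ok_sum: "finite S \<Longrightarrow> (\<And>i. i \<in> S \<Longrightarrow> ok (f i)) \<Longrightarrow> ok (\<lambda>x. \<Sum>i\<in>S. f i x)"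
  by (induction S rule: finite_induct) (auto intro: ok_add ok_const)

lemma PP_cont: "continuous_on S (PP n)"
  unfolding PP_eq uu_def vv_def by (intro continuous_intros) auto

lemma DP_cont: "continuous_on S (DP n)"
  unfolding DP_def[abs_def] d1_def uu_def vv_def by (intro continuous_intros) auto

lemma ok_PP: "ok (PP n)" by (rule ok_cont[OF PP_cont])
lemma ok_DP: "ok (DP n)" by (rule ok_cont[OF DP_cont])

lemma w_end: "w 1 = 0" "w (-1) = 0" by (auto simp: w_def jacobi_weight_def)

lemma green:
  assumes S: "finite S" and gc: "continuous_on {-1..1} g"
    and gd: "\<And>x. x \<in> {-1<..<1} - S \<Longrightarrow> (g has_real_derivative g' x) (at x)"
    and ok: "ok g'"
  shows "integral {-1..1} (\<lambda>x. (g' x * (1 - x^2) * DP n x) * w x) = lam n * integral {-1..1} (\<lambda>x. (g x * PP n x) * w x)"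
proof -
  define f where "f x = g x * WW x * DP n x" for x
  define F where "F x = g' x * WW x * DP n x + g x * (w x * (b - a - (a+b+2)*x) * DP n x + WW x * D2P n x)" for x
  have Fint: "(F has_integral (f 1 - f (-1))) {-1..1}"
  proof (rule fundamental_theorem_of_calculus_interior_strong[OF S])
    show "continuous_on {-1..1} f" unfolding f_def
      by (intro continuous_intros gc WW_cont DP_cont)
    fix x assume x: "x \<in> {-1<..<1} - S"
    have x': "-1 < x" "x < 1" using x by auto
    have "(f has_real_derivative ((g' x * WW x + (w x * (b - a - (a+b+2)*x)) * g x) * DP n x + D2P n x * (g x * WW x))) (at x)"
      unfolding f_def[abs_def]
      by (intro DERIV_mult gd WW_deriv[OF x'] DP_deriv x)
    moreover have "((g' x * WW x + (w x * (b - a - (a+b+2)*x)) * g x) * DP n x + D2P n x * (g x * WW x)) = F x"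
      unfolding F_def by (simp add: algebra_simps)
    ultimately have "(f has_real_derivative F x) (at x)" by simp
    then show "(f has_vector_derivative F x) (at x)"
      by (simp add: has_real_derivative_iff_has_vector_derivative)
  qed auto
  have f0: "f 1 = 0" "f (-1) = 0" by (auto simp: f_def WW_end)
  have Feq: "F x = (g' x * (1 - x^2) * DP n x) * w x - lam n * ((g x * PP n x) * w x)" if "x \<in> {-1..1}" for x
  proof (cases "x = 1 \<or> x = -1")
    case True then show ?thesis by (auto simp: F_def WW_end w_end)
  next
    case False
    then have x: "-1 < x" "x < 1" using that by auto
    have "F x = g' x * WW x * DP n x + g x * w x * ((1 - x^2) * D2P n x + (b - a - (a+b+2)*x) * DP n x)"
      unfolding F_def WW_eq[OF that] by (simp add: algebra_simps)
    also have "\<dots> = (g' x * (1 - x^2) * DP n x) * w x - lam n * ((g x * PP n x) * w x)"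
      unfolding ode[OF x] WW_eq[OF that] by (simp add: algebra_simps)
    finally show ?thesis .
  qed
  have H: "((\<lambda>x. (g' x * (1 - x^2) * DP n x) * w x - lam n * ((g x * PP n x) * w x)) has_integral 0) {-1..1}"
  proof -
    have "(F has_integral 0) {-1..1}" using Fint f0 by simp
    then show ?thesis by (rule has_integral_eq[rotated]) (rule Feq)
  qed
  have okA: "ok (\<lambda>x. g' x * (1 - x^2) * DP n x)"
    by (intro ok_mult ok ok_DP ok_cont) (intro continuous_intros)
  have okB: "ok (\<lambda>x. g x * PP n x)"
    by (intro ok_mult ok_PP ok_cont gc)
  have i1: "(\<lambda>x. (g' x * (1 - x^2) * DP n x) * w x) integrable_on {-1..1}" by (rule ok_int[OF okA])
  have i2: "(\<lambda>x. lam n * ((g x * PP n x) * w x)) integrable_on {-1..1}"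
    using integrable_cmul[OF ok_int[OF okB], of "lam n"] by simp
  have "integral {-1..1} (\<lambda>x. (g' x * (1 - x^2) * DP n x) * w x - lam n * ((g x * PP n x) * w x)) = 0"
    using H by blast
  then have "integral {-1..1} (\<lambda>x. (g' x * (1 - x^2) * DP n x) * w x) - integral {-1..1} (\<lambda>x. lam n * ((g x * PP n x) * w x)) = 0"
    by (simp only: integral_diff[OF i1 i2])
  then show ?thesis by simp
qed

end

context jac begin

definition ip :: "(real \<Rightarrow> real) \<Rightarrow> (real \<Rightarrow> real) \<Rightarrow> (real \<Rightarrow> real) \<Rightarrow> real" where
  "ip \<rho> f g = integral {-1..1} (\<lambda>x. f x * g x * \<rho> x * w x)"

lemma ip_int: "ok \<rho> \<Longrightarrow> ok f \<Longrightarrow> ok g \<Longrightarrow> (\<lambda>x. f x * g x * \<rho> x * w x) integrable_on {-1..1}"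
  using ok_int[of "\<lambda>x. f x * g x * \<rho> x"] ok_mult by blast

lemma ip_sym: "ip \<rho> f g = ip \<rho> g f"
  unfolding ip_def by (simp add: mult.commute mult.left_commute)

lemma ip_cmult_left: "ip \<rho> (\<lambda>x. c * f x) g = c * ip \<rho> f g"
  unfolding ip_def by (simp add: mult.assoc integral_mult)

lemma ip_diff_left: "ok \<rho> \<Longrightarrow> ok f \<Longrightarrow> ok h \<Longrightarrow> ok g \<Longrightarrow>
   ip \<rho> (\<lambda>x. f x - h x) g = ip \<rho> f g - ip \<rho> h g"
proof -
  assume h: "ok \<rho>" "ok f" "ok h" "ok g"
  have "(\<lambda>x. (f x - h x) * g x * \<rho> x * w x) = (\<lambda>x. f x * g x * \<rho> x * w x - h x * g x * \<rho> x * w x)"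
    by (simp add: fun_eq_iff algebra_simps)
  then show ?thesis unfolding ip_def using integral_diff[OF ip_int[OF h(1,2,4)] ip_int[OF h(1,3,4)]] by simp
qed

lemma ip_sum_left: "finite S \<Longrightarrow> ok \<rho> \<Longrightarrow> (\<And>i. i \<in> S \<Longrightarrow> ok (f i)) \<Longrightarrow> ok g \<Longrightarrow>
   ip \<rho> (\<lambda>x. \<Sum>i\<in>S. f i x) g = (\<Sum>i\<in>S. ip \<rho> (f i) g)"
  unfolding ip_def by (subst integral_sum[symmetric]) (auto intro: ip_int simp: sum_distrib_right)

lemma ip_nonneg: "ok \<rho> \<Longrightarrow> (\<And>x. x \<in> {-1..1} \<Longrightarrow> \<rho> x \<ge> 0) \<Longrightarrow> ok f \<Longrightarrow> ip \<rho> f f \<ge> 0"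
proof -
  assume h: "ok \<rho>" "\<And>x. x \<in> {-1..1} \<Longrightarrow> \<rho> x \<ge> 0" "ok f"
  have "0 \<le> f x * f x * \<rho> x * w x" if "x \<in> {-1..1}" for x
    using mult_nonneg_nonneg[OF mult_nonneg_nonneg[OF zero_le_square[of "f x"] h(2)[OF that]] w_nonneg[of x]] by simp
  then show ?thesis unfolding ip_def by (intro integral_nonneg ip_int h) auto
qed

lemma bessel:
  assumes S: "finite S" and \<rho>: "ok \<rho>" "\<And>x. x \<in> {-1..1} \<Longrightarrow> \<rho> x \<ge> 0"
    and g: "ok g" and e: "\<And>n. n \<in> S \<Longrightarrow> ok (e n)"
    and on: "\<And>m n. m \<in> S \<Longrightarrow> n \<in> S \<Longrightarrow> ip \<rho> (e m) (e n) = (if m = n then 1 else 0)"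
  shows "(\<Sum>n\<in>S. (ip \<rho> g (e n))^2) \<le> ip \<rho> g g"
proof -
  define c where "c n = ip \<rho> g (e n)" for n
  define E where "E x = (\<Sum>n\<in>S. c n * e n x)" for x
  have okE: "ok E" unfolding E_def[abs_def] by (intro ok_sum S ok_cmult e)
  have okd: "ok (\<lambda>x. g x - E x)" by (intro ok_diff g okE)
  have eE: "ip \<rho> (e m) E = c m" if "m \<in> S" for m
  proof -
    have "ip \<rho> (e m) E = ip \<rho> E (e m)" by (rule ip_sym)
    also have "\<dots> = (\<Sum>n\<in>S. ip \<rho> (\<lambda>x. c n * e n x) (e m))"
      unfolding E_def by (rule ip_sum_left) (auto intro!: S \<rho> ok_cmult e that)
    also have "\<dots> = (\<Sum>n\<in>S. c n * (if n = m then 1 else 0))"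
      by (rule sum.cong) (auto simp: ip_cmult_left on that)
    also have "\<dots> = c m" using S that by (simp add: if_distrib cong: if_cong)
    finally show ?thesis .
  qed
  have EE: "ip \<rho> E E = (\<Sum>n\<in>S. (c n)^2)"
  proof -
    have L: "ip \<rho> (\<lambda>x. \<Sum>n\<in>S. c n * e n x) E = (\<Sum>n\<in>S. ip \<rho> (\<lambda>x. c n * e n x) E)"
      by (rule ip_sum_left) (auto intro!: S \<rho> ok_cmult e okE)
    have Eeq: "(\<lambda>x. \<Sum>n\<in>S. c n * e n x) = E" by (simp add: E_def fun_eq_iff)
    have "ip \<rho> E E = (\<Sum>n\<in>S. ip \<rho> (\<lambda>x. c n * e n x) E)" using L unfolding Eeq .
    also have "\<dots> = (\<Sum>n\<in>S. (c n)^2)"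
      by (rule sum.cong) (auto simp: ip_cmult_left eE power2_eq_square)
    finally show ?thesis .
  qed
  have gE: "ip \<rho> E g = (\<Sum>n\<in>S. (c n)^2)"
  proof -
    have "ip \<rho> E g = (\<Sum>n\<in>S. ip \<rho> (\<lambda>x. c n * e n x) g)"
      unfolding E_def[abs_def] by (rule ip_sum_left) (auto intro!: S \<rho> ok_cmult e g)
    also have "\<dots> = (\<Sum>n\<in>S. (c n)^2)"
      by (rule sum.cong) (auto simp: ip_cmult_left c_def ip_sym[of \<rho> "e _" g] power2_eq_square)
    finally show ?thesis .
  qed
  have "0 \<le> ip \<rho> (\<lambda>x. g x - E x) (\<lambda>x. g x - E x)" by (rule ip_nonneg[OF \<rho> okd])
  also have "\<dots> = ip \<rho> g g - ip \<rho> E g - (ip \<rho> g E - ip \<rho> E E)"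
  proof -
    have 1: "ip \<rho> (\<lambda>x. g x - E x) (\<lambda>x. g x - E x) = ip \<rho> g (\<lambda>x. g x - E x) - ip \<rho> E (\<lambda>x. g x - E x)"
      by (rule ip_diff_left[OF \<rho>(1) g okE okd])
    have 2: "ip \<rho> g (\<lambda>x. g x - E x) = ip \<rho> g g - ip \<rho> E g"
      by (subst ip_sym) (rule ip_diff_left[OF \<rho>(1) g okE g])
    have 3: "ip \<rho> E (\<lambda>x. g x - E x) = ip \<rho> g E - ip \<rho> E E"
      by (subst ip_sym) (rule ip_diff_left[OF \<rho>(1) g okE okE])
    show ?thesis unfolding 1 2 3 ..
  qed
  also have "\<dots> = ip \<rho> g g - (\<Sum>n\<in>S. (c n)^2)"
    using gE EE ip_sym[of \<rho> g E] by simp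
  finally show ?thesis unfolding c_def by simp
qed

end

context jac begin

abbreviation one :: "real \<Rightarrow> real" where "one \<equiv> (\<lambda>_. 1)"
abbreviation rho2 :: "real \<Rightarrow> real" where "rho2 \<equiv> (\<lambda>x. 1 - x^2)"

lemma ok_one: "ok one" by (rule ok_const)
lemma ok_rho2: "ok rho2" by (rule ok_cont) (intro continuous_intros)
lemma rho2_nonneg: "x \<in> {-1..1} \<Longrightarrow> rho2 x \<ge> 0"
  by (auto simp: abs_le_iff abs_square_le_1)

lemma lam_nonneg: "lam n \<ge> 0"
  using a_ge b_ge unfolding lam_def by (intro mult_nonneg_nonneg) auto

lemma lam_ge: "lam n \<ge> real n * real n"
  using a_ge b_ge unfolding lam_def by (intro mult_left_mono) auto

lemma lam_mono: "m < n \<Longrightarrow> lam m < lam n"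
proof -
  assume mn: "m < n"
  have "lam n - lam m = (real n - real m) * (real n + real m + a + b + 1)"
    unfolding lam_def by (simp add: algebra_simps)
  moreover have "real n - real m > 0" "real n + real m + a + b + 1 > 0" using mn a_ge b_ge by auto
  ultimately show ?thesis by (metis diff_gt_0_iff_gt mult_pos_pos)
qed

lemma lam_inj: "m \<noteq> n \<Longrightarrow> lam m \<noteq> lam n"
  using lam_mono[of m n] lam_mono[of n m] by (cases "m < n") auto

lemma green_gen:
  assumes "finite S" "continuous_on {-1..1} g"
    "\<And>x. x \<in> {-1<..<1} - S \<Longrightarrow> (g has_real_derivative g' x) (at x)" "ok g'"
  shows "ip rho2 g' (DP n) = lam n * ip one g (PP n)"
proof -
  have "ip rho2 g' (DP n) = integral {-1..1} (\<lambda>x. (g' x * (1 - x^2) * DP n x) * w x)"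
    unfolding ip_def by (rule integral_cong) (simp add: algebra_simps)
  also have "\<dots> = lam n * integral {-1..1} (\<lambda>x. (g x * PP n x) * w x)"
    by (rule green[OF assms])
  also have "\<dots> = lam n * ip one g (PP n)" unfolding ip_def by simp
  finally show ?thesis .
qed

lemma green_PP: "ip rho2 (DP m) (DP n) = lam n * ip one (PP m) (PP n)"
  by (rule green_gen[of "{}"]) (auto intro: PP_cont PP_deriv ok_DP)

lemma orth_PP: "m \<noteq> n \<Longrightarrow> ip one (PP m) (PP n) = 0"
proof -
  assume mn: "m \<noteq> n"
  have 1: "ip rho2 (DP m) (DP n) = lam n * ip one (PP m) (PP n)" by (rule green_PP)
  have 2: "ip rho2 (DP m) (DP n) = lam m * ip one (PP m) (PP n)" by (metis green_PP ip_sym)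
  have "lam n * ip one (PP m) (PP n) = lam m * ip one (PP m) (PP n)" using trans[OF 1[symmetric] 2] .
  then have "(lam n - lam m) * ip one (PP m) (PP n) = 0" by (simp add: algebra_simps)
  then show ?thesis using lam_inj[OF mn] by simp
qed

definition hn :: "nat \<Rightarrow> real" where "hn n = ip one (PP n) (PP n)"

lemma PP_one: "PP n 1 = (real n + a) gchoose n"
proof -
  have "PP n 1 = (\<Sum>s\<le>n. cc n s * (0^s * 1^(n-s)))" by (simp add: PP_eq uu_def vv_def)
  also have "\<dots> = (\<Sum>s\<in>{0}. cc n s * (0^s * 1^(n-s)))"
    by (rule sum.mono_neutral_right) auto
  finally show ?thesis by (simp add: cc_def)
qed

lemma PP_one_pos: "PP n 1 > 0"
proof -
  have "((real n + a) gchoose n) * fact n = (\<Prod>i = 0..<n. real n + a - real i)"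
    by (rule gbinomial_mult_fact')
  moreover have "(\<Prod>i = 0..<n. real n + a - real i) > 0"
    using a_gt by (intro prod_pos) auto
  ultimately have "((real n + a) gchoose n) * fact n > 0" by simp
  then show ?thesis unfolding PP_one by (simp add: zero_less_mult_iff)
qed

lemma w_pos: "-1 < x \<Longrightarrow> x < 1 \<Longrightarrow> w x > 0"
  by (simp add: w_def jacobi_weight_def)

lemma w_cont: "{c..d} \<subseteq> {-1<..<1} \<Longrightarrow> continuous_on {c..d} w"
  unfolding w_def jacobi_weight_def[abs_def]
  by (intro continuous_intros) auto

lemma hn_pos: "hn n > 0"
proof -
  have "isCont (PP n) 1" using PP_cont[of UNIV n] by (simp add: continuous_on_eq_continuous_at)
  then have "\<forall>\<^sub>F x in nhds 1. PP n x > 0"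
    using PP_one_pos[of n] unfolding isCont_def by (metis order_tendstoD(1) tendsto_at_iff_tendsto_nhds)
  then obtain d where d: "d > 0" "\<And>x. dist x 1 < d \<Longrightarrow> PP n x > 0"
    unfolding eventually_nhds_metric by blast
  define e where "e = min d 1 / 2"
  have e: "e > 0" "e < d" "e \<le> 1/2" using d unfolding e_def by auto
  define c where "c = 1 - e"
  define c' where "c' = 1 - e/2"
  have sub: "{c..c'} \<subseteq> {-1<..<1}" using e unfolding c_def c'_def by auto
  define f where "f x = PP n x * PP n x * 1 * w x" for x
  have fpos: "f x > 0" if "x \<in> {c..c'}" for x
  proof -
    have "PP n x > 0" using d(2)[of x] that e unfolding c_def c'_def by (auto simp: dist_real_def)
    moreover have "w x > 0" using sub that by (intro w_pos) auto
    ultimately show ?thesis unfolding f_def by simp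
  qed
  have fc: "continuous_on {c..c'} f" unfolding f_def
    by (intro continuous_intros w_cont[OF sub] PP_cont)
  have ne: "c < c'" using e unfolding c_def c'_def by auto
  have "integral {c..c'} f \<noteq> 0"
  proof
    assume "integral {c..c'} f = 0"
    then have "(f has_integral 0) (cbox c c')"
      using integrable_continuous_interval[OF fc] by (metis cbox_interval has_integral_integral)
    then have "f c = 0" using has_integral_0_cbox_imp_0[of c c' f c] fc fpos ne
      by (auto simp: less_imp_le)
    then show False using fpos[of c] ne by auto
  qed
  moreover have "integral {c..c'} f \<ge> 0"
    using fpos by (intro integral_nonneg integrable_continuous_interval fc) (auto simp: less_imp_le)
  ultimately have "integral {c..c'} f > 0" by simp
  also have "integral {c..c'} f \<le> integral {-1..1} f"
  proof (rule integral_subset_le)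
    show "{c..c'} \<subseteq> {-1..1}" using sub by auto
    show "f integrable_on {c..c'}" by (intro integrable_continuous_interval fc)
    show "f integrable_on {-1..1}" unfolding f_def by (intro ip_int ok_PP ok_one)
    show "\<forall>x\<in>{-1..1}. 0 \<le> f x" unfolding f_def using w_nonneg by simp
  qed
  finally show ?thesis unfolding hn_def ip_def f_def .
qed

definition pn :: "nat \<Rightarrow> real \<Rightarrow> real" where "pn n x = inverse (sqrt (hn n)) * PP n x"

lemma ok_pn: "ok (pn n)" unfolding pn_def[abs_def] by (intro ok_cmult ok_PP)

lemma pn_cont: "continuous_on S (pn n)" unfolding pn_def[abs_def] by (intro continuous_intros PP_cont)

lemma orthonormal: "ip one (pn m) (pn n) = (if m = n then 1 else 0)"
proof -
  have "ip one (pn m) (pn n) = inverse (sqrt (hn m)) * inverse (sqrt (hn n)) * ip one (PP m) (PP n)"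
    unfolding pn_def[abs_def] ip_cmult_left by (subst ip_sym, subst ip_cmult_left, subst ip_sym) simp
  then show ?thesis using orth_PP[of m n] hn_pos[of n]
    by (auto simp: hn_def[symmetric] field_simps real_sqrt_mult[symmetric])
qed

definition dn :: "nat \<Rightarrow> real \<Rightarrow> real" where "dn n x = inverse (sqrt (lam n * hn n)) * DP n x"

lemma ok_dn: "ok (dn n)" unfolding dn_def[abs_def] by (intro ok_cmult ok_DP)

lemma lam_pos: "n \<ge> 1 \<Longrightarrow> lam n > 0"
  using lam_mono[of 0 n] by (simp add: lam_def)

lemma orthonormal_d: "m \<ge> 1 \<Longrightarrow> n \<ge> 1 \<Longrightarrow> ip rho2 (dn m) (dn n) = (if m = n then 1 else 0)"
proof -
  assume m: "m \<ge> 1" and n: "n \<ge> 1"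
  have "ip rho2 (dn m) (dn n) = inverse (sqrt (lam m * hn m)) * inverse (sqrt (lam n * hn n)) * ip rho2 (DP m) (DP n)"
    unfolding dn_def[abs_def] ip_cmult_left by (subst ip_sym, subst ip_cmult_left, subst ip_sym) simp
  also have "\<dots> = inverse (sqrt (lam m * hn m)) * inverse (sqrt (lam n * hn n)) * (lam n * ip one (PP m) (PP n))"
    by (simp add: green_PP)
  finally have e: "ip rho2 (dn m) (dn n) = inverse (sqrt (lam m * hn m)) * inverse (sqrt (lam n * hn n)) * (lam n * ip one (PP m) (PP n))" .
  show ?thesis
  proof (cases "m = n")
    case True
    have X: "lam n * hn n > 0" using hn_pos[of n] lam_pos[OF n] by simp
    have "sqrt (lam n * hn n) * sqrt (lam n * hn n) = lam n * hn n" using X by simp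
    then show ?thesis unfolding e unfolding True hn_def[symmetric] using X hn_pos[of n] lam_pos[OF n]
      by (simp add: field_simps)
  next
    case False then show ?thesis unfolding e using orth_PP[OF False] by simp
  qed
qed

lemma coef_d:
  assumes "n \<ge> 1" "finite S" "continuous_on {-1..1} g"
    "\<And>x. x \<in> {-1<..<1} - S \<Longrightarrow> (g has_real_derivative g' x) (at x)" "ok g'"
  shows "(ip one g (pn n))^2 = (ip rho2 g' (dn n))^2 / lam n"
proof -
  have l: "lam n > 0" using lam_pos[OF assms(1)] .
  have h: "hn n > 0" by (rule hn_pos)
  have "ip one g (pn n) = inverse (sqrt (hn n)) * ip one g (PP n)"
    unfolding pn_def[abs_def] by (subst ip_sym, subst ip_cmult_left, subst ip_sym) simp
  also have "ip one g (PP n) = ip rho2 g' (DP n) / lam n"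
    using green_gen[OF assms(2-)] l by simp
  also have "ip rho2 g' (DP n) = sqrt (lam n * hn n) * ip rho2 g' (dn n)"
    unfolding dn_def[abs_def] using l h by (subst ip_sym, subst ip_cmult_left, subst ip_sym) simp
  finally have "ip one g (pn n) = ip rho2 g' (dn n) * (sqrt (lam n) * sqrt (hn n)) / (sqrt (hn n) * lam n)"
    by (simp add: real_sqrt_mult field_simps)
  also have "\<dots> = ip rho2 g' (dn n) * sqrt (lam n) / lam n" using h by simp
  finally have e: "ip one g (pn n) = ip rho2 g' (dn n) * sqrt (lam n) / lam n" .
  show ?thesis unfolding e using l by (simp add: field_simps power2_eq_square)
qed

end

context jac begin

definition Cw :: real where "Cw = 2 powr \<bar>a\<bar> + 2 powr \<bar>b\<bar>"
definition Cw2 :: real where "Cw2 = 2 powr \<bar>a+1\<bar> + 2 powr \<bar>b+1\<bar>"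

lemma Cw_pos: "Cw > 0" and Cw2_pos: "Cw2 > 0" by (auto simp: Cw_def Cw2_def intro: add_pos_pos)

lemma bnd12: "1 \<le> (t::real) \<Longrightarrow> t \<le> 2 \<Longrightarrow> t powr c \<le> 2 powr \<bar>c\<bar>"
proof -
  assume t: "1 \<le> t" "t \<le> 2"
  have "t powr c \<le> t powr \<bar>c\<bar>" using t by (intro powr_mono) auto
  also have "\<dots> \<le> 2 powr \<bar>c\<bar>" using t by (intro powr_mono2) auto
  finally show ?thesis .
qed

lemma inv_sqrt_powr: "0 < t \<Longrightarrow> t powr (-1/2) = inverse (sqrt t)"
  by (simp add: powr_minus powr_half_sqrt[symmetric])

lemma w_bound:
  assumes "-1 < x" "x < 1"
  shows "w x \<le> Cw / sqrt (1 - \<bar>x\<bar>)"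
proof (cases "x \<ge> 0")
  case True
  have p: "0 < 1 - x" "1 - x \<le> 1" using assms True by auto
  have "w x = (1-x) powr a * (1+x) powr b" by (simp add: w_def jacobi_weight_def)
  also have "\<dots> \<le> (1-x) powr (-1/2) * 2 powr \<bar>b\<bar>"
    using p a_ge True assms by (intro mult_mono powr_mono' bnd12) auto
  also have "\<dots> \<le> Cw / sqrt (1 - \<bar>x\<bar>)"
    using True p unfolding inv_sqrt_powr[OF p(1)] Cw_def by (simp add: field_simps)
  finally show ?thesis .
next
  case False
  have p: "0 < 1 + x" "1 + x \<le> 1" using assms False by auto
  have "w x = (1-x) powr a * (1+x) powr b" by (simp add: w_def jacobi_weight_def)
  also have "\<dots> \<le> 2 powr \<bar>a\<bar> * (1+x) powr (-1/2)"
    using p b_ge False assms by (intro mult_mono powr_mono' bnd12) auto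
  also have "\<dots> \<le> Cw / sqrt (1 - \<bar>x\<bar>)"
    using False p unfolding inv_sqrt_powr[OF p(1)] Cw_def by (simp add: field_simps)
  finally show ?thesis .
qed

lemma W_bound:
  assumes "x \<in> {-1..1}"
  shows "(1 - x^2) * w x \<le> Cw2 * sqrt (1 - \<bar>x\<bar>)"
proof (cases "x = 1 \<or> x = -1")
  case True then show ?thesis using Cw2_pos by (auto simp: w_end)
next
  case F: False
  have WWe: "(1 - x^2) * w x = (1-x) powr (a+1) * (1+x) powr (b+1)"
    using WW_eq[OF assms] by (simp add: WW_def)
  show ?thesis
  proof (cases "x \<ge> 0")
    case True
    have p: "0 < 1 - x" "1 - x \<le> 1" using assms True F by auto
    have "(1-x) powr (a+1) * (1+x) powr (b+1) \<le> (1-x) powr (1/2) * 2 powr \<bar>b+1\<bar>"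
      using p a_ge True assms by (intro mult_mono powr_mono' bnd12) auto
    also have "\<dots> \<le> Cw2 * sqrt (1 - \<bar>x\<bar>)"
      using True p unfolding powr_half_sqrt[OF less_imp_le[OF p(1)]] Cw2_def by (simp add: field_simps)
    finally show ?thesis unfolding WWe .
  next
    case False
    have p: "0 < 1 + x" "1 + x \<le> 1" using assms False F by auto
    have "(1-x) powr (a+1) * (1+x) powr (b+1) \<le> 2 powr \<bar>a+1\<bar> * (1+x) powr (1/2)"
      using p b_ge False assms by (intro mult_mono powr_mono' bnd12) auto
    also have "\<dots> \<le> Cw2 * sqrt (1 - \<bar>x\<bar>)"
      using False p unfolding powr_half_sqrt[OF less_imp_le[OF p(1)]] Cw2_def by (simp add: field_simps)
    finally show ?thesis unfolding WWe .
  qed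
qed

lemma tail_int1:
  assumes "r \<le> 1"
  shows "((\<lambda>x. inverse (sqrt (1 - x))) has_integral 2 * sqrt (1 - r)) {r..1}"
proof -
  have "((\<lambda>x. inverse (sqrt (1 - x))) has_integral ((\<lambda>x. -2 * sqrt (1 - x)) 1 - (\<lambda>x. -2 * sqrt (1 - x)) r)) {r..1}"
  proof (rule fundamental_theorem_of_calculus_interior[OF assms])
    show "continuous_on {r..1} (\<lambda>x. -2 * sqrt (1 - x))" by (intro continuous_intros)
    fix x assume x: "x \<in> {r<..<1}"
    have "((\<lambda>x. -2 * sqrt (1 - x)) has_real_derivative inverse (sqrt (1 - x))) (at x)"
      using x by (auto intro!: derivative_eq_intros simp: field_simps)
    then show "((\<lambda>x. -2 * sqrt (1 - x)) has_vector_derivative inverse (sqrt (1 - x))) (at x)"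
      by (simp add: has_real_derivative_iff_has_vector_derivative)
  qed
  then show ?thesis by simp
qed

lemma tail_int2:
  assumes "r \<le> 1"
  shows "((\<lambda>x. inverse (sqrt (1 + x))) has_integral 2 * sqrt (1 - r)) {-1..-r}"
proof -
  have "((\<lambda>x. inverse (sqrt (1 + x))) has_integral ((\<lambda>x. 2 * sqrt (1 + x)) (-r) - (\<lambda>x. 2 * sqrt (1 + x)) (-1))) {-1..-r}"
  proof (rule fundamental_theorem_of_calculus_interior)
    show "-1 \<le> -r" using assms by simp
    show "continuous_on {-1..-r} (\<lambda>x. 2 * sqrt (1 + x))" by (intro continuous_intros)
    fix x assume x: "x \<in> {-1<..<-r}"
    have "((\<lambda>x. 2 * sqrt (1 + x)) has_real_derivative inverse (sqrt (1 + x))) (at x)"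
      using x by (auto intro!: derivative_eq_intros simp: field_simps)
    then show "((\<lambda>x. 2 * sqrt (1 + x)) has_vector_derivative inverse (sqrt (1 + x))) (at x)"
      by (simp add: has_real_derivative_iff_has_vector_derivative)
  qed
  then show ?thesis by simp
qed

end

definition psi :: "real \<Rightarrow> real \<Rightarrow> real \<Rightarrow> real" where
  "psi r e x = max 0 (min 1 ((\<bar>x\<bar> - (r - e)) / e))"
definition dpsi :: "real \<Rightarrow> real \<Rightarrow> real \<Rightarrow> real" where
  "dpsi r e x = (if r - e < \<bar>x\<bar> \<and> \<bar>x\<bar> < r then sgn x / e else 0)"

lemma psi_cont: "0 < e \<Longrightarrow> continuous_on S (psi r e)"
  unfolding psi_def[abs_def] by (intro continuous_intros) auto

lemma psi_range: "0 \<le> psi r e x" "psi r e x \<le> 1"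
  by (auto simp: psi_def)

lemma psi_deriv:
  assumes e: "0 < e" "e \<le> r" and x: "x \<notin> {-r, -(r-e), 0, r-e, r}"
  shows "(psi r e has_real_derivative dpsi r e x) (at x)"
proof -
  have xn: "x \<noteq> -r" "x \<noteq> -(r-e)" "x \<noteq> 0" "x \<noteq> r-e" "x \<noteq> r" using x by auto
  consider "\<bar>x\<bar> < r - e" | "r - e < x \<and> x < r" | "-r < x \<and> x < -(r-e)" | "r < x" | "x < -r"
    using xn e by (smt (verit))
  then show ?thesis
  proof cases
    case 1
    show ?thesis
    proof (rule has_field_derivative_transform_within_open[of "\<lambda>_. 0" _ _ "{-(r-e)<..<r-e}"])
      show "((\<lambda>_. 0) has_real_derivative dpsi r e x) (at x)" using 1 by (simp add: dpsi_def)
      show "x \<in> {-(r-e)<..<r-e}" using 1 by auto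
      fix y :: real assume "y \<in> {-(r-e)<..<r-e}"
      then have "\<bar>y\<bar> - (r - e) < 0" by auto
      then have "(\<bar>y\<bar> - (r - e)) / e < 0" using e by (simp add: divide_neg_pos)
      then show "0 = psi r e y" by (simp add: psi_def)
    qed auto
  next
    case 2
    show ?thesis
    proof (rule has_field_derivative_transform_within_open[of "\<lambda>y. (y - (r - e)) / e" _ _ "{r-e<..<r}"])
      show "((\<lambda>y. (y - (r - e)) / e) has_real_derivative dpsi r e x) (at x)"
        using 2 e by (auto intro!: derivative_eq_intros simp: dpsi_def)
      show "x \<in> {r-e<..<r}" using 2 by auto
      fix y :: real assume y: "y \<in> {r-e<..<r}"
      then have "\<bar>y\<bar> = y" using e by auto
      moreover have "(y - (r - e)) / e \<le> 1" "0 \<le> (y - (r - e)) / e" using y e by (auto simp: field_simps)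
      ultimately show "(y - (r - e)) / e = psi r e y" by (simp add: psi_def)
    qed auto
  next
    case 3
    show ?thesis
    proof (rule has_field_derivative_transform_within_open[of "\<lambda>y. (- y - (r - e)) / e" _ _ "{-r<..<-(r-e)}"])
      show "((\<lambda>y. (- y - (r - e)) / e) has_real_derivative dpsi r e x) (at x)"
        using 3 e by (auto intro!: derivative_eq_intros simp: dpsi_def)
      show "x \<in> {-r<..<-(r-e)}" using 3 by auto
      fix y :: real assume y: "y \<in> {-r<..<-(r-e)}"
      then have "\<bar>y\<bar> = - y" using e by auto
      moreover have "(- y - (r - e)) / e \<le> 1" "0 \<le> (- y - (r - e)) / e" using y e by (auto simp: field_simps)
      ultimately show "(- y - (r - e)) / e = psi r e y" by (simp add: psi_def)
    qed auto
  next
    case 4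
    show ?thesis
    proof (rule has_field_derivative_transform_within_open[of "\<lambda>_. 1" _ _ "{r<..}"])
      have "dpsi r e x = 0" using 4 e by (auto simp: dpsi_def)
      then show "((\<lambda>_. 1) has_real_derivative dpsi r e x) (at x)" by simp
      show "x \<in> {r<..}" using 4 by auto
      fix y :: real assume y: "y \<in> {r<..}"
      then have "1 \<le> (\<bar>y\<bar> - (r - e)) / e" using e by (auto simp: field_simps)
      then show "1 = psi r e y" by (simp add: psi_def)
    qed auto
  next
    case 5
    show ?thesis
    proof (rule has_field_derivative_transform_within_open[of "\<lambda>_. 1" _ _ "{..<-r}"])
      have "dpsi r e x = 0" using 5 e by (auto simp: dpsi_def)
      then show "((\<lambda>_. 1) has_real_derivative dpsi r e x) (at x)" by simp
      show "x \<in> {..<-r}" using 5 by auto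
      fix y :: real assume y: "y \<in> {..<-r}"
      then have "1 \<le> (\<bar>y\<bar> - (r - e)) / e" using e by (auto simp: field_simps)
      then show "1 = psi r e y" by (simp add: psi_def)
    qed auto
  qed
qed

lemma dpsi_bound: "0 < e \<Longrightarrow> \<bar>dpsi r e x\<bar> \<le> (if r - e \<le> \<bar>x\<bar> \<and> \<bar>x\<bar> \<le> r then 1 / e else 0)"
  by (auto simp: dpsi_def sgn_if)

lemma psi_out: "0 < e \<Longrightarrow> \<not> (r - e \<le> \<bar>x\<bar> \<and> \<bar>x\<bar> \<le> r) \<Longrightarrow> psi r e x = (if \<bar>x\<bar> \<le> r then 0 else 1)"
  by (auto simp: psi_def field_simps not_le)

lemma dpsi_meas: "dpsi r e \<in> borel_measurable borel"
  unfolding dpsi_def[abs_def] by measurable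

lemma bound_ex: fixes h :: "real \<Rightarrow> real" shows "continuous_on {-1..1} h \<Longrightarrow> \<exists>B>0. \<forall>x\<in>{-1..1::real}. \<bar>h x\<bar> \<le> B"
proof -
  assume c: "continuous_on {-1..1} h"
  have "compact (h ` {-1..1})" by (rule compact_continuous_image[OF c]) auto
  then have "bounded (h ` {-1..1})" by (rule compact_imp_bounded)
  then obtain B where "\<forall>x\<in>{-1..1}. \<bar>h x\<bar> \<le> B" unfolding bounded_real by auto
  then show ?thesis by (intro exI[of _ "max B 1"]) force
qed

locale jacf = jac +
  fixes f :: "nat \<Rightarrow> real" and K :: "nat set"
  assumes finK: "finite K"
begin

definition FF :: "real \<Rightarrow> real" where "FF x = (\<Sum>m\<in>K. f m * pn m x)"
definition FF' :: "real \<Rightarrow> real" where "FF' x = (\<Sum>m\<in>K. f m * (inverse (sqrt (hn m)) * DP m x))"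

lemma FF_deriv: "(FF has_real_derivative FF' x) (at x)"
  unfolding FF_def[abs_def] FF'_def pn_def by (intro DERIV_sum DERIV_cmult PP_deriv)

lemma FF_cont: "continuous_on S FF"
  unfolding FF_def[abs_def] by (intro continuous_intros pn_cont)

lemma FF'_cont: "continuous_on S FF'"
  unfolding FF'_def[abs_def] by (intro continuous_intros DP_cont)

lemma FF_borel: "FF \<in> borel_measurable borel"
  by (rule borel_measurable_continuous_onI[OF FF_cont])

lemma FF'_borel: "FF' \<in> borel_measurable borel"
  by (rule borel_measurable_continuous_onI[OF FF'_cont])

definition BF :: real where "BF = (SOME B. B > 0 \<and> (\<forall>x\<in>{-1..1}. \<bar>FF x\<bar> \<le> B))"
definition BF' :: real where "BF' = (SOME B. B > 0 \<and> (\<forall>x\<in>{-1..1}. \<bar>FF' x\<bar> \<le> B))"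

lemma BF: "BF > 0" "x \<in> {-1..1} \<Longrightarrow> \<bar>FF x\<bar> \<le> BF"
  using someI_ex[OF bound_ex[OF FF_cont]] unfolding BF_def by auto
lemma BF': "BF' > 0" "x \<in> {-1..1} \<Longrightarrow> \<bar>FF' x\<bar> \<le> BF'"
  using someI_ex[OF bound_ex[OF FF'_cont]] unfolding BF'_def by auto

lemma FF_sq: "x \<in> {-1..1} \<Longrightarrow> FF x * FF x \<le> BF^2"
  using BF(2)[of x] BF(1) abs_le_square_iff[of "FF x" BF] by (simp add: power2_eq_square)
lemma FF'_sq: "x \<in> {-1..1} \<Longrightarrow> FF' x * FF' x \<le> BF'^2"
  using BF'(2)[of x] BF'(1) abs_le_square_iff[of "FF' x" BF'] by (simp add: power2_eq_square)

definition GG :: "real \<Rightarrow> real \<Rightarrow> real" where "GG r x = (if \<bar>x\<bar> \<le> r then 0 else FF x)"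

lemma ok_GG: "ok (GG r)"
proof -
  note FF_borel[measurable]
  have "GG r \<in> borel_measurable borel" unfolding GG_def[abs_def] by measurable
  then have "GG r \<in> borel_measurable (lebesgue_on {-1..1})" by (rule borel_to_leb)
  moreover have "\<forall>x\<in>{-1..1}. \<bar>GG r x\<bar> \<le> BF" using BF by (auto simp: GG_def)
  ultimately show ?thesis unfolding ok_def by blast
qed

lemma bessel_pn: "finite S \<Longrightarrow> ok g \<Longrightarrow> (\<Sum>n\<in>S. (ip one g (pn n))^2) \<le> ip one g g"
  by (rule bessel) (auto simp: ok_one ok_pn orthonormal)

lemma bessel_dn: "finite S \<Longrightarrow> S \<subseteq> {1..} \<Longrightarrow> ok g \<Longrightarrow> (\<Sum>n\<in>S. (ip rho2 g (dn n))^2) \<le> ip rho2 g g"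
proof -
  assume S: "finite S" "S \<subseteq> {1..}" and g: "ok g"
  show ?thesis
  proof (rule bessel[OF S(1) ok_rho2 _ g ok_dn])
    fix x :: real assume "x \<in> {-1..1}"
    then show "0 \<le> 1 - x^2" using abs_square_le_1[of x] by auto
  next
    fix m n assume "m \<in> S" "n \<in> S"
    then show "ip rho2 (dn m) (dn n) = (if m = n then 1 else 0)" using S(2) by (intro orthonormal_d) auto
  qed
qed

lemma C1:
  assumes r: "0 \<le> r" "r \<le> 1"
  shows "ip one (GG r) (GG r) \<le> 4 * BF^2 * Cw * sqrt (1 - r)"
proof -
  define K0 where "K0 = BF^2 * Cw"
  have K0: "K0 \<ge> 0" using Cw_pos by (simp add: K0_def)
  define h where "h x = (if x \<in> {r..1} then K0 * inverse (sqrt (1 - x)) else 0)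
      + (if x \<in> {-1..-r} then K0 * inverse (sqrt (1 + x)) else 0)" for x
  have hint: "(h has_integral (K0 * (2 * sqrt (1 - r)) + K0 * (2 * sqrt (1 - r)))) {-1..1}"
    unfolding h_def
  proof (rule has_integral_add)
    show "((\<lambda>x. if x \<in> {r..1} then K0 * inverse (sqrt (1 - x)) else 0) has_integral K0 * (2 * sqrt (1 - r))) {-1..1}"
      using r by (subst has_integral_restrict) (auto intro!: has_integral_mult_right tail_int1)
    show "((\<lambda>x. if x \<in> {-1..-r} then K0 * inverse (sqrt (1 + x)) else 0) has_integral K0 * (2 * sqrt (1 - r))) {-1..1}"
      using r by (subst has_integral_restrict) (auto intro!: has_integral_mult_right tail_int2)
  qed
  have pt: "GG r x * GG r x * 1 * w x \<le> h x" if x: "x \<in> {-1..1}" for x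
  proof -
    have h0: "0 \<le> h x" unfolding h_def using K0 by (auto intro!: add_nonneg_nonneg)
    show ?thesis
    proof (cases "\<bar>x\<bar> \<le> r \<or> \<bar>x\<bar> = 1")
      case True
      then have z: "GG r x * GG r x * 1 * w x = 0" using w_end by (auto simp: GG_def abs_if split: if_splits)
      show ?thesis using h0 z by linarith
    next
      case False
      then have x1: "-1 < x" "x < 1" "r < \<bar>x\<bar>" using x by auto
      have "GG r x * GG r x * 1 * w x = FF x * FF x * w x" using x1 by (simp add: GG_def)
      also have "\<dots> \<le> BF^2 * (Cw / sqrt (1 - \<bar>x\<bar>))"
        using FF_sq[OF x] w_bound[OF x1(1,2)] w_nonneg[of x] by (intro mult_mono) auto
      also have "\<dots> = K0 * inverse (sqrt (1 - \<bar>x\<bar>))" by (simp add: K0_def field_simps)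
      also have "\<dots> \<le> h x"
      proof (cases "x > 0")
        case True
        then have "x \<in> {r..1}" using x1 by auto
        moreover have "0 \<le> (if x \<in> {-1..-r} then K0 * inverse (sqrt (1 + x)) else 0)" using K0 x1 by auto
        ultimately show ?thesis unfolding h_def using True by simp
      next
        case False
        then have "x \<in> {-1..-r}" using x1 by auto
        moreover have "0 \<le> (if x \<in> {r..1} then K0 * inverse (sqrt (1 - x)) else 0)" using K0 x1 by auto
        ultimately show ?thesis unfolding h_def using False by simp
      qed
      finally show ?thesis .
    qed
  qed
  have "ip one (GG r) (GG r) \<le> integral {-1..1} h"
    unfolding ip_def by (rule integral_le[OF ip_int[OF ok_one ok_GG ok_GG]]) (use hint pt in auto)
  also have "\<dots> = 4 * BF^2 * Cw * sqrt (1 - r)" using hint by (simp add: integral_unique K0_def)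
  finally show ?thesis .
qed

end

lemma has_integral_ind_const:
  assumes "{c..d} \<subseteq> {-1..1::real}" "c \<le> d"
  shows "((\<lambda>x. if x \<in> {c..d} then K else 0) has_integral K * (d - c)) {-1..1}"
  using assms has_integral_const_real[of K c d] by (subst has_integral_restrict) (auto simp: content_real mult.commute)

context jacf begin

definition GE :: "real \<Rightarrow> real \<Rightarrow> real \<Rightarrow> real" where "GE r e x = FF x * psi r e x"
definition GE' :: "real \<Rightarrow> real \<Rightarrow> real \<Rightarrow> real" where
  "GE' r e x = FF' x * psi r e x + FF x * dpsi r e x"

lemma GE_cont: "0 < e \<Longrightarrow> continuous_on S (GE r e)"
  unfolding GE_def[abs_def] by (intro continuous_intros FF_cont psi_cont)

lemma GE_deriv: "0 < e \<Longrightarrow> e \<le> r \<Longrightarrow> x \<notin> {-r, -(r-e), 0, r-e, r} \<Longrightarrow>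
   (GE r e has_real_derivative GE' r e x) (at x)"
  unfolding GE_def[abs_def] GE'_def
  by (rule DERIV_cong[OF DERIV_mult[OF FF_deriv psi_deriv]]) (auto simp: algebra_simps)

lemma ok_GE: "0 < e \<Longrightarrow> ok (GE r e)"
  by (intro ok_cont GE_cont)

lemma ok_GE': assumes e: "0 < e" shows "ok (GE' r e)"
proof -
  note FF_borel[measurable] FF'_borel[measurable] dpsi_meas[measurable]
  have "psi r e \<in> borel_measurable borel" by (rule borel_measurable_continuous_onI[OF psi_cont[OF e]])
  note this[measurable]
  have "GE' r e \<in> borel_measurable borel" unfolding GE'_def[abs_def] by measurable
  then have "GE' r e \<in> borel_measurable (lebesgue_on {-1..1})" by (rule borel_to_leb)
  moreover have "\<forall>x\<in>{-1..1}. \<bar>GE' r e x\<bar> \<le> BF' + BF / e"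
  proof
    fix x :: real assume x: "x \<in> {-1..1}"
    have "\<bar>GE' r e x\<bar> \<le> \<bar>FF' x\<bar> * \<bar>psi r e x\<bar> + \<bar>FF x\<bar> * \<bar>dpsi r e x\<bar>"
      unfolding GE'_def abs_mult[symmetric] by (rule abs_triangle_ineq)
    also have "\<dots> \<le> BF' * 1 + BF * (1 / e)"
    proof (intro add_mono mult_mono)
      show "\<bar>dpsi r e x\<bar> \<le> 1 / e" using dpsi_bound[OF e, of r x] e by (auto split: if_splits)
    qed (use BF BF' x psi_range[of r e x] in auto)
    finally show "\<bar>GE' r e x\<bar> \<le> BF' + BF / e" by simp
  qed
  ultimately show ?thesis unfolding ok_def by blast
qed

lemma E1:
  assumes r: "1/2 \<le> r" "r < 1" and e: "0 < e" "e \<le> 1 - r"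
  shows "ip one (\<lambda>x. GG r x - GE r e x) (\<lambda>x. GG r x - GE r e x) \<le> 2 * e * (BF^2 * Cw / sqrt (1 - r))"
proof -
  define K1 where "K1 = BF^2 * Cw / sqrt (1 - r)"
  have K1: "K1 \<ge> 0" using Cw_pos r by (simp add: K1_def)
  define h where "h x = (if x \<in> {r-e..r} then K1 else 0) + (if x \<in> {-r..-(r-e)} then K1 else 0)" for x
  have hint: "(h has_integral (K1 * (r - (r - e)) + K1 * (-(r-e) - -r))) {-1..1}"
    unfolding h_def using r e by (intro has_integral_add has_integral_ind_const) auto
  have okd: "ok (\<lambda>x. GG r x - GE r e x)" by (intro ok_diff ok_GG ok_GE e)
  have pt: "(GG r x - GE r e x) * (GG r x - GE r e x) * 1 * w x \<le> h x" if x: "x \<in> {-1..1}" for x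
  proof -
    have h0: "0 \<le> h x" unfolding h_def using K1 by (auto intro!: add_nonneg_nonneg)
    show ?thesis
    proof (cases "r - e \<le> \<bar>x\<bar> \<and> \<bar>x\<bar> \<le> r")
      case False
      then have "GG r x - GE r e x = 0" using psi_out[OF e(1) False] by (auto simp: GG_def GE_def)
      then show ?thesis using h0 by simp
    next
      case True
      then have x1: "-1 < x" "x < 1" using r by auto
      have "(GG r x - GE r e x) * (GG r x - GE r e x) * 1 * w x = (FF x * FF x) * (psi r e x * psi r e x) * w x"
        using True by (simp add: GG_def GE_def algebra_simps)
      also have "\<dots> \<le> BF^2 * 1 * (Cw / sqrt (1 - r))"
      proof (intro mult_mono)
        show "FF x * FF x \<le> BF^2" by (rule FF_sq[OF x])
        show "psi r e x * psi r e x \<le> 1" using psi_range[of r e x] by (simp add: mult_le_one)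
        have "w x \<le> Cw / sqrt (1 - \<bar>x\<bar>)" by (rule w_bound[OF x1])
        also have "\<dots> \<le> Cw / sqrt (1 - r)" using True r Cw_pos
          by (intro divide_left_mono) (auto intro!: mult_pos_pos)
        finally show "w x \<le> Cw / sqrt (1 - r)" .
      qed (use w_nonneg psi_range in auto)
      also have "\<dots> = K1" by (simp add: K1_def)
      also have "K1 \<le> h x"
        using True K1 unfolding h_def by (cases "x \<ge> 0") (auto simp: abs_if)
      finally show ?thesis .
    qed
  qed
  have "ip one (\<lambda>x. GG r x - GE r e x) (\<lambda>x. GG r x - GE r e x) \<le> integral {-1..1} h"
    unfolding ip_def by (rule integral_le[OF ip_int[OF ok_one okd okd]]) (use hint pt in auto)
  also have "\<dots> = 2 * e * K1" using hint by (simp add: integral_unique algebra_simps)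
  finally show ?thesis by (simp add: K1_def)
qed

definition M0 :: real where "M0 = integral {-1..1} (\<lambda>x. (1 - x^2) * w x)"

lemma E2:
  assumes r: "1/2 \<le> r" "r < 1" and e: "0 < e" "e \<le> 1 - r"
  shows "ip rho2 (GE' r e) (GE' r e) \<le> 2 * BF'^2 * M0 + 2 * e * (2 * BF^2 * Cw2 * sqrt (2 * (1 - r)) / e^2)"
proof -
  define K2 where "K2 = 2 * BF^2 * Cw2 * sqrt (2 * (1 - r)) / e^2"
  have K2: "K2 \<ge> 0" using Cw2_pos r by (simp add: K2_def)
  define h where "h x = 2 * BF'^2 * ((1 - x^2) * w x) + ((if x \<in> {r-e..r} then K2 else 0) + (if x \<in> {-r..-(r-e)} then K2 else 0))" for x
  have i0: "((\<lambda>x. (1 - x^2) * w x) has_integral M0) {-1..1}"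
    unfolding M0_def using ok_int[OF ok_rho2] by (simp add: has_integral_integral)
  have hint: "(h has_integral (2 * BF'^2 * M0 + (K2 * (r - (r - e)) + K2 * (-(r-e) - -r)))) {-1..1}"
    unfolding h_def using r e by (intro has_integral_add has_integral_ind_const has_integral_mult_right i0) auto
  have pt: "GE' r e x * GE' r e x * rho2 x * w x \<le> h x" if x: "x \<in> {-1..1}" for x
  proof -
    define W2 where "W2 = (1 - x^2) * w x"
    have W2: "0 \<le> W2" unfolding W2_def using x abs_square_le_1[of x] w_nonneg[of x] by (auto intro!: mult_nonneg_nonneg)
    have "GE' r e x * GE' r e x * rho2 x * w x = (GE' r e x)^2 * W2" by (simp add: W2_def power2_eq_square)
    also have "\<dots> \<le> (2 * (FF' x * psi r e x)^2 + 2 * (FF x * dpsi r e x)^2) * W2"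
    proof (rule mult_right_mono[OF _ W2])
      have "0 \<le> (FF' x * psi r e x - FF x * dpsi r e x)^2" by simp
      then show "(GE' r e x)^2 \<le> 2 * (FF' x * psi r e x)^2 + 2 * (FF x * dpsi r e x)^2"
        unfolding GE'_def by (simp add: power2_eq_square algebra_simps)
    qed
    also have "\<dots> = 2 * (FF' x * psi r e x)^2 * W2 + 2 * (FF x * dpsi r e x)^2 * W2" by (simp add: algebra_simps)
    also have "2 * (FF' x * psi r e x)^2 * W2 \<le> 2 * BF'^2 * W2"
    proof -
      have "(FF' x * psi r e x)^2 = (FF' x * FF' x) * (psi r e x * psi r e x)" by (simp add: power2_eq_square algebra_simps)
      also have "\<dots> \<le> BF'^2 * 1"
        using FF'_sq[OF x] psi_range[of r e x] by (intro mult_mono) (auto simp: mult_le_one)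
      finally show ?thesis using W2 by (simp add: mult_right_mono)
    qed
    also have "2 * (FF x * dpsi r e x)^2 * W2 \<le> (if x \<in> {r-e..r} then K2 else 0) + (if x \<in> {-r..-(r-e)} then K2 else 0)"
    proof (cases "r - e \<le> \<bar>x\<bar> \<and> \<bar>x\<bar> \<le> r")
      case False
      then have "dpsi r e x = 0" by (auto simp: dpsi_def)
      then show ?thesis using K2 by simp
    next
      case True
      have d: "(dpsi r e x)^2 \<le> (1/e)^2"
        using dpsi_bound[OF e(1), of r x] True e abs_le_square_iff[of "dpsi r e x" "1/e"] by auto
      have "(FF x * dpsi r e x)^2 = (FF x * FF x) * (dpsi r e x)^2" by (simp add: power2_eq_square)
      also have "\<dots> \<le> BF^2 * (1/e)^2" using FF_sq[OF x] d by (intro mult_mono) auto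
      finally have A: "(FF x * dpsi r e x)^2 \<le> BF^2 * (1/e)^2" .
      have "W2 \<le> Cw2 * sqrt (1 - \<bar>x\<bar>)" unfolding W2_def by (rule W_bound[OF x])
      also have "\<dots> \<le> Cw2 * sqrt (2 * (1 - r))" using True e Cw2_pos by (intro mult_left_mono) auto
      finally have B: "W2 \<le> Cw2 * sqrt (2 * (1 - r))" .
      have "2 * (FF x * dpsi r e x)^2 * W2 \<le> 2 * (BF^2 * (1/e)^2) * (Cw2 * sqrt (2 * (1 - r)))"
        using A B W2 by (intro mult_mono) auto
      also have "\<dots> = K2" by (simp add: K2_def field_simps)
      also have "K2 \<le> (if x \<in> {r-e..r} then K2 else 0) + (if x \<in> {-r..-(r-e)} then K2 else 0)"
        using True K2 by (cases "x \<ge> 0") (auto simp: abs_if)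
      finally show ?thesis .
    qed
    finally show ?thesis unfolding h_def W2_def by simp
  qed
  have "ip rho2 (GE' r e) (GE' r e) \<le> integral {-1..1} h"
    unfolding ip_def by (rule integral_le[OF ip_int[OF ok_rho2 ok_GE'[OF e(1)] ok_GE'[OF e(1)]]]) (use hint pt in auto)
  also have "\<dots> = 2 * BF'^2 * M0 + 2 * e * K2" using hint by (simp add: integral_unique algebra_simps)
  finally show ?thesis by (simp add: K2_def)
qed

end

context jacf begin

definition Atail :: real where "Atail = 4 * BF^2 * Cw + 4 * BF'^2 * M0 + 8 * sqrt 2 * BF^2 * Cw2"

lemma M0_nonneg: "M0 \<ge> 0"
  unfolding M0_def using ok_int[OF ok_rho2]
  by (intro integral_nonneg) (auto intro!: mult_nonneg_nonneg w_nonneg simp: abs_square_le_1 abs_le_iff)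

lemma tail_bound:
  assumes r: "1/2 \<le> r" "r < 1" and N: "1 \<le> N" and S: "finite S" "S \<subseteq> {N..}"
  shows "(\<Sum>n\<in>S. (ip one (GG r) (pn n))^2) \<le> Atail / real N"
proof (cases "sqrt (1 - r) / real N \<le> 1 - r")
  case False
  define s where "s = sqrt (1 - r)"
  have s: "s > 0" "s * s = 1 - r" using r by (auto simp: s_def)
  have Npos: "real N > 0" using N by auto
  have "1 - r < s / real N" using False unfolding s_def by simp
  then have "s * s < s / real N" using s by simp
  then have "s * (s * real N) < s * 1" using Npos by (simp add: field_simps)
  then have "s * real N < 1" using s(1) mult_less_cancel_left_pos by blast
  then have sN: "s \<le> 1 / real N" using Npos by (simp add: field_simps)
  have "(\<Sum>n\<in>S. (ip one (GG r) (pn n))^2) \<le> ip one (GG r) (GG r)"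
    by (rule bessel_pn[OF S(1) ok_GG])
  also have "\<dots> \<le> 4 * BF^2 * Cw * s" unfolding s_def using C1[of r] r by simp
  also have "\<dots> \<le> 4 * BF^2 * Cw * (1 / real N)" using sN Cw_pos by (intro mult_left_mono) auto
  also have "\<dots> \<le> Atail / real N"
    unfolding Atail_def using M0_nonneg Cw2_pos Npos by (simp add: divide_right_mono)
  finally show ?thesis .
next
  case True
  define e where "e = sqrt (1 - r) / real N"
  have Npos: "real N > 0" using N by auto
  have e: "0 < e" "e \<le> 1 - r" using True r Npos by (auto simp: e_def)
  have er: "e \<le> r" using e r by auto
  define X where "X n = ip one (\<lambda>x. GG r x - GE r e x) (pn n)" for n
  define Y where "Y n = ip one (GE r e) (pn n)" for n
  have XY: "ip one (GG r) (pn n) = X n + Y n" for n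
    unfolding X_def Y_def by (subst ip_diff_left) (auto intro: ok_one ok_GG ok_GE e ok_pn)
  have sq: "(X n + Y n)^2 \<le> 2 * (X n)^2 + 2 * (Y n)^2" for n
  proof -
    have "0 \<le> (X n - Y n)^2" by simp
    then show ?thesis by (simp add: power2_eq_square algebra_simps)
  qed
  have SX: "(\<Sum>n\<in>S. (X n)^2) \<le> 2 * BF^2 * Cw / real N"
  proof -
    have "(\<Sum>n\<in>S. (X n)^2) \<le> ip one (\<lambda>x. GG r x - GE r e x) (\<lambda>x. GG r x - GE r e x)"
      unfolding X_def by (rule bessel_pn[OF S(1)]) (intro ok_diff ok_GG ok_GE e)
    also have "\<dots> \<le> 2 * e * (BF^2 * Cw / sqrt (1 - r))" by (rule E1[OF r e])
    also have "\<dots> = 2 * BF^2 * Cw / real N" using r by (simp add: e_def field_simps)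
    finally show ?thesis .
  qed
  have Yn: "(Y n)^2 \<le> (ip rho2 (GE' r e) (dn n))^2 / (real N)^2" if n: "n \<in> S" for n
  proof -
    have n1: "n \<ge> 1" and nN: "N \<le> n" using n S N by auto
    have "(Y n)^2 = (ip rho2 (GE' r e) (dn n))^2 / lam n"
      unfolding Y_def
    proof (rule coef_d[OF n1, of "{-r, -(r-e), 0, r-e, r}"])
      show "continuous_on {-1..1} (GE r e)" by (rule GE_cont[OF e(1)])
      show "ok (GE' r e)" by (rule ok_GE'[OF e(1)])
      fix x assume "x \<in> {-1<..<1} - {-r, -(r-e), 0, r-e, r}"
      then show "(GE r e has_real_derivative GE' r e x) (at x)" by (intro GE_deriv e er) auto
    qed auto
    also have "\<dots> \<le> (ip rho2 (GE' r e) (dn n))^2 / (real N)^2"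
    proof (rule divide_left_mono)
      have "(real N)^2 \<le> real n * real n" using nN by (simp add: power2_eq_square mult_mono)
      then show "(real N)^2 \<le> lam n" using lam_ge[of n] by linarith
      show "0 < lam n * (real N)^2" using lam_pos[OF n1] Npos by simp
    qed simp
    finally show ?thesis .
  qed
  have SY: "(\<Sum>n\<in>S. (Y n)^2) \<le> (2 * BF'^2 * M0 + 4 * sqrt 2 * BF^2 * Cw2) / real N"
  proof -
    have "(\<Sum>n\<in>S. (Y n)^2) \<le> (\<Sum>n\<in>S. (ip rho2 (GE' r e) (dn n))^2 / (real N)^2)"
      by (rule sum_mono) (rule Yn)
    also have "\<dots> = (\<Sum>n\<in>S. (ip rho2 (GE' r e) (dn n))^2) / (real N)^2"
      by (simp add: sum_divide_distrib)
    also have "\<dots> \<le> ip rho2 (GE' r e) (GE' r e) / (real N)^2"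
      using S N by (intro divide_right_mono bessel_dn ok_GE' e) auto
    also have "\<dots> \<le> (2 * BF'^2 * M0 + 2 * e * (2 * BF^2 * Cw2 * sqrt (2 * (1 - r)) / e^2)) / (real N)^2"
      by (intro divide_right_mono E2[OF r e]) simp
    also have "2 * e * (2 * BF^2 * Cw2 * sqrt (2 * (1 - r)) / e^2) = 4 * sqrt 2 * BF^2 * Cw2 * real N"
    proof -
      have q: "sqrt (2 * (1 - r)) = sqrt 2 * sqrt (1 - r)" by (rule real_sqrt_mult)
      have "2 * e * (2 * BF^2 * Cw2 * sqrt (2 * (1 - r)) / e^2) = 4 * BF^2 * Cw2 * (sqrt 2 * sqrt (1 - r)) / e"
        unfolding q using e by (simp add: power2_eq_square field_simps)
      also have "\<dots> = 4 * sqrt 2 * BF^2 * Cw2 * real N"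
        using r Npos unfolding e_def by (simp add: field_simps)
      finally show ?thesis .
    qed
    also have "(2 * BF'^2 * M0 + 4 * sqrt 2 * BF^2 * Cw2 * real N) / (real N)^2
        \<le> (2 * BF'^2 * M0 + 4 * sqrt 2 * BF^2 * Cw2) / real N"
    proof -
      have "2 * BF'^2 * M0 / (real N)^2 \<le> 2 * BF'^2 * M0 / real N"
        using N M0_nonneg by (intro divide_left_mono) (auto simp: power2_eq_square)
      moreover have "4 * sqrt 2 * BF^2 * Cw2 * real N / (real N)^2 = 4 * sqrt 2 * BF^2 * Cw2 / real N"
        using Npos by (simp add: power2_eq_square)
      ultimately show ?thesis by (simp add: add_divide_distrib)
    qed
    finally show ?thesis .
  qed
  have "(\<Sum>n\<in>S. (ip one (GG r) (pn n))^2) \<le> (\<Sum>n\<in>S. 2 * (X n)^2 + 2 * (Y n)^2)"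
    unfolding XY by (rule sum_mono) (rule sq)
  also have "\<dots> = 2 * (\<Sum>n\<in>S. (X n)^2) + 2 * (\<Sum>n\<in>S. (Y n)^2)"
    by (simp add: sum.distrib sum_distrib_left)
  also have "\<dots> \<le> 2 * (2 * BF^2 * Cw / real N) + 2 * ((2 * BF'^2 * M0 + 4 * sqrt 2 * BF^2 * Cw2) / real N)"
    using SX SY by linarith
  also have "\<dots> = Atail / real N" using Npos unfolding Atail_def by (simp add: field_simps)
  finally show ?thesis .
qed

end

lemma young2:
  fixes p y L :: real
  assumes p: "1 < p" "p < 2" and y: "0 \<le> y" and L: "0 < L"
  shows "y powr (p/2) \<le> (p/2) * L * y + ((2-p)/2) * L powr (-(p/(2-p)))"
proof (cases "y = 0")
  case True then show ?thesis using p by simp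
next
  case False
  then have y0: "y > 0" using y by simp
  define P where "P = 2/p"
  define Q where "Q = 2/(2-p)"
  have PQ: "P > 1" "Q > 1" "1/P + 1/Q = 1" using p unfolding P_def Q_def by (auto simp: field_simps)
  have "(L * y) powr (p/2) * L powr (-(p/2)) \<le> ((L * y) powr (p/2)) powr P / P + (L powr (-(p/2))) powr Q / Q"
    by (rule Youngs_inequality[OF PQ]) auto
  moreover have "(L * y) powr (p/2) * L powr (-(p/2)) = y powr (p/2)"
    using L y0 by (simp add: powr_mult powr_minus field_simps)
  moreover have "((L * y) powr (p/2)) powr P / P = (p/2) * L * y"
    using L y0 p unfolding P_def by (simp add: powr_powr)
  moreover have "(L powr (-(p/2))) powr Q / Q = ((2-p)/2) * L powr (-(p/(2-p)))"
    using p unfolding Q_def by (simp add: powr_powr field_simps)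
  ultimately show ?thesis by simp
qed

lemma min_le_geo:
  fixes x y t :: real
  assumes "0 \<le> x" "0 \<le> y" "0 \<le> t" "t \<le> 1"
  shows "min x y \<le> x powr t * y powr (1 - t)"
proof (cases "x \<le> y")
  case True
  show ?thesis
  proof (cases "x = 0")
    case True then show ?thesis by simp
  next
    case False
    then have "x = x powr t * x powr (1 - t)" using assms by (simp add: powr_add[symmetric])
    also have "\<dots> \<le> x powr t * y powr (1 - t)" using True assms by (intro mult_left_mono powr_mono2) auto
    finally show ?thesis using True by simp
  qed
next
  case False
  show ?thesis
  proof (cases "y = 0")
    case True then show ?thesis using assms by simp
  next
    case F2: False
    then have "y = y powr t * y powr (1 - t)" using assms by (simp add: powr_add[symmetric])
    also have "\<dots> \<le> x powr t * y powr (1 - t)" using False assms by (intro mult_right_mono powr_mono2) auto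
    finally show ?thesis using False by simp
  qed
qed

definition th :: "real \<Rightarrow> real" where "th p = (1 - 1/p) / 2"
definition qq :: "real \<Rightarrow> real" where "qq p = p / (2 - p)"
definition Z1 :: "real \<Rightarrow> real" where "Z1 p = (\<Sum>N. real N powr (1/p - 2 + th p))"
definition Z2 :: "real \<Rightarrow> real" where "Z2 p = (\<Sum>n. real n powr (- (1/p * qq p)))"
definition Phi :: "real \<Rightarrow> real \<Rightarrow> real \<Rightarrow> real" where
  "Phi p A D = (if 2 \<le> p then D powr (p/2) else
     D powr (p/2) + (p/2) * D powr (th p / 2) * A powr (1 - th p) * Z1 p
       + ((2-p)/2) * D powr (th p * qq p / 2) * Z2 p)"

lemma abs_powr_sq: "\<bar>c::real\<bar> powr p = (c^2) powr (p/2)"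
proof -
  have "\<bar>c\<bar> powr p = \<bar>c\<bar> powr (2 * (p/2))" by simp
  also have "\<dots> = (\<bar>c\<bar> powr 2) powr (p/2)" by (simp only: powr_powr)
  also have "\<dots> = (c^2) powr (p/2)" by simp
  finally show ?thesis .
qed

lemma c0_bound:
  fixes c :: real
  assumes "c^2 \<le> D" "0 < p"
  shows "\<bar>c\<bar> powr p \<le> D powr (p/2)"
  unfolding abs_powr_sq using assms by (intro powr_mono2) auto

lemma lp_partial_small:
  fixes c :: "nat \<Rightarrow> real" and p A D :: real
  assumes p: "1 < p" "p < 2" and A: "0 \<le> A" and D: "0 < D"
    and H0: "\<And>S. finite S \<Longrightarrow> (\<Sum>n\<in>S. (c n)^2) \<le> D"
    and H1: "\<And>N S. 1 \<le> N \<Longrightarrow> finite S \<Longrightarrow> S \<subseteq> {N..} \<Longrightarrow> (\<Sum>n\<in>S. (c n)^2) \<le> A / real N"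
  shows "(\<Sum>n\<in>{1..M}. \<bar>c n\<bar> powr p) \<le>
     (p/2) * D powr (th p / 2) * A powr (1 - th p) * Z1 p + ((2-p)/2) * D powr (th p * qq p / 2) * Z2 p"
proof -
  define s where "s = 1/p"
  define \<theta> where "\<theta> = th p"
  define q where "q = qq p"
  define e1 where "e1 = 1/p - 2 + th p"
  define e2 where "e2 = - (1/p * qq p)"
  have \<theta>: "0 \<le> \<theta>" "\<theta> \<le> 1" using p by (auto simp: \<theta>_def th_def field_simps)
  have q: "q > 0" using p by (simp add: q_def qq_def)
  have e1: "e1 < -1" using p by (simp add: e1_def th_def field_simps)
  have e2: "e2 < -1" using p by (simp add: e2_def qq_def field_simps)
  have sum1: "summable (\<lambda>N. real N powr e1)" using e1 by (simp add: summable_real_powr_iff)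
  have sum2: "summable (\<lambda>n. real n powr e2)" using e2 by (simp add: summable_real_powr_iff)
  define h where "h n = (\<Sum>N\<in>{1..n}. real N powr (s - 1))" for n
  have s1: "s - 1 \<le> 0" using p by (simp add: s_def)
  have h_ge: "real n powr s \<le> h n" if n: "1 \<le> n" for n
  proof -
    have "(\<Sum>N\<in>{1..n}. real n powr (s - 1)) \<le> h n"
      unfolding h_def by (rule sum_mono) (rule powr_mono2'[OF s1], auto)
    moreover have "(\<Sum>N\<in>{1..n}. real n powr (s - 1)) = real n powr s"
      using n by (simp add: powr_diff field_simps)
    ultimately show ?thesis by simp
  qed
  have h_pos: "0 < h n" if "1 \<le> n" for n
  proof -
    have "0 < real n powr s" using that by simp
    then show ?thesis using h_ge[OF that] by linarith
  qed
  have S2: "(\<Sum>n\<in>{1..M}. h n * (c n)^2) \<le> D powr \<theta> * A powr (1 - \<theta>) * Z1 p"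
  proof -
    have "(\<Sum>n\<in>{1..M}. h n * (c n)^2) = (\<Sum>n\<in>{1..M}. \<Sum>N\<in>{N. N \<in> {1..M} \<and> N \<le> n}. real N powr (s - 1) * (c n)^2)"
    proof (rule sum.cong[OF refl])
      fix n assume "n \<in> {1..M}"
      then have "{N. N \<in> {1..M} \<and> N \<le> n} = {1..n}" by auto
      then show "h n * (c n)^2 = (\<Sum>N\<in>{N. N \<in> {1..M} \<and> N \<le> n}. real N powr (s - 1) * (c n)^2)"
        by (simp add: h_def sum_distrib_right)
    qed
    also have "\<dots> = (\<Sum>N\<in>{1..M}. \<Sum>n\<in>{n. n \<in> {1..M} \<and> N \<le> n}. real N powr (s - 1) * (c n)^2)"
      by (rule sum.swap_restrict) auto
    also have "\<dots> \<le> (\<Sum>N\<in>{1..M}. D powr \<theta> * A powr (1 - \<theta>) * real N powr e1)"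
    proof (rule sum_mono)
      fix N assume N: "N \<in> {1..M}"
      then have Ne: "{n. n \<in> {1..M} \<and> N \<le> n} = {N..M}" by auto
      have Npos: "real N > 0" using N by auto
      have "(\<Sum>n\<in>{N..M}. (c n)^2) \<le> min D (A / real N)"
        using H0[of "{N..M}"] H1[of N "{N..M}"] N by auto
      also have "\<dots> \<le> D powr \<theta> * (A / real N) powr (1 - \<theta>)"
        by (rule min_le_geo) (use D A \<theta> Npos in auto)
      finally have B: "(\<Sum>n\<in>{N..M}. (c n)^2) \<le> D powr \<theta> * (A / real N) powr (1 - \<theta>)" .
      have "(\<Sum>n\<in>{n. n \<in> {1..M} \<and> N \<le> n}. real N powr (s - 1) * (c n)^2) = real N powr (s - 1) * (\<Sum>n\<in>{N..M}. (c n)^2)"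
        unfolding Ne by (simp add: sum_distrib_left)
      also have "\<dots> \<le> real N powr (s - 1) * (D powr \<theta> * (A / real N) powr (1 - \<theta>))"
        by (rule mult_left_mono[OF B]) simp
      also have "\<dots> = D powr \<theta> * A powr (1 - \<theta>) * (real N powr (s - 1) / real N powr (1 - \<theta>))"
        unfolding powr_divide by (simp add: divide_inverse mult_ac)
      also have "real N powr (s - 1) / real N powr (1 - \<theta>) = real N powr e1"
        using Npos by (simp add: powr_diff[symmetric] e1_def s_def \<theta>_def algebra_simps)
      finally show "(\<Sum>n\<in>{n. n \<in> {1..M} \<and> N \<le> n}. real N powr (s - 1) * (c n)^2) \<le> D powr \<theta> * A powr (1 - \<theta>) * real N powr e1" .
    qed
    also have "\<dots> = D powr \<theta> * A powr (1 - \<theta>) * (\<Sum>N\<in>{1..M}. real N powr e1)"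
      by (simp add: sum_distrib_left)
    also have "\<dots> \<le> D powr \<theta> * A powr (1 - \<theta>) * Z1 p"
      unfolding Z1_def e1_def[symmetric]
      by (intro mult_left_mono sum_le_suminf sum1) auto
    finally show ?thesis .
  qed
  define t where "t = D powr (-(\<theta>/2))"
  have t: "t > 0" using D by (simp add: t_def)
  have Y: "\<bar>c n\<bar> powr p \<le> (p/2) * t * (h n * (c n)^2) + ((2-p)/2) * t powr (-q) * real n powr e2"
    if n: "1 \<le> n" for n
  proof -
    have hp: "h n > 0" by (rule h_pos[OF n])
    have 1: "\<bar>c n\<bar> powr p \<le> (p/2) * (t * h n) * (c n)^2 + ((2-p)/2) * (t * h n) powr (-(p/(2-p)))"
      unfolding abs_powr_sq[of "c n"] using p t hp by (intro young2) auto
    have 2: "(t * h n) powr (-(p/(2-p))) = t powr (-q) * h n powr (-q)"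
      by (simp add: powr_mult q_def qq_def)
    have "h n powr (-q) \<le> (real n powr s) powr (-q)"
      using h_ge[OF n] q n by (intro powr_mono2') auto
    also have "(real n powr s) powr (-q) = real n powr e2"
      by (simp add: powr_powr e2_def s_def q_def)
    finally have 3: "h n powr (-q) \<le> real n powr e2" .
    have 5: "((2-p)/2) * (t powr (-q) * h n powr (-q)) \<le> ((2-p)/2) * (t powr (-q) * real n powr e2)"
      using p 3 by (intro mult_left_mono) auto
    have e1': "(p/2) * (t * h n) * (c n)^2 = (p/2) * t * (h n * (c n)^2)" by (simp add: mult_ac)
    have e2': "((2-p)/2) * (t powr (-q) * real n powr e2) = ((2-p)/2) * t powr (-q) * real n powr e2" by (simp add: mult_ac)
    show ?thesis using 1 5 unfolding 2 e1' e2' by linarith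
  qed
  have "(\<Sum>n\<in>{1..M}. \<bar>c n\<bar> powr p) \<le> (\<Sum>n\<in>{1..M}. (p/2) * t * (h n * (c n)^2) + ((2-p)/2) * t powr (-q) * real n powr e2)"
    by (rule sum_mono) (rule Y, auto)
  also have "\<dots> = (p/2) * t * (\<Sum>n\<in>{1..M}. h n * (c n)^2) + ((2-p)/2) * t powr (-q) * (\<Sum>n\<in>{1..M}. real n powr e2)"
    by (simp add: sum.distrib sum_distrib_left)
  also have "\<dots> \<le> (p/2) * t * (D powr \<theta> * A powr (1 - \<theta>) * Z1 p) + ((2-p)/2) * t powr (-q) * Z2 p"
  proof (intro add_mono mult_left_mono S2)
    show "(\<Sum>n\<in>{1..M}. real n powr e2) \<le> Z2 p" unfolding Z2_def e2_def[symmetric]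
      by (intro sum_le_suminf sum2) auto
  qed (use p t in auto)
  finally have F: "(\<Sum>n\<in>{1..M}. \<bar>c n\<bar> powr p) \<le> (p/2) * t * (D powr \<theta> * A powr (1 - \<theta>) * Z1 p) + ((2-p)/2) * t powr (-q) * Z2 p" .
  have tD: "t * D powr \<theta> = D powr (\<theta>/2)" using D by (simp add: t_def powr_add[symmetric])
  have T1: "(p/2) * t * (D powr \<theta> * A powr (1 - \<theta>) * Z1 p) = (p/2) * D powr (\<theta>/2) * A powr (1 - \<theta>) * Z1 p"
    by (simp add: tD[symmetric] mult_ac)
  have T2: "t powr (-q) = D powr (\<theta> * q / 2)" by (simp add: t_def powr_powr)
  note F2 = F[unfolded T1 T2]
  show ?thesis using F2 unfolding \<theta>_def q_def .
qed

lemma lp_small: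
  fixes c :: "nat \<Rightarrow> real" and p A D :: real
  assumes p: "1 < p" and A: "0 \<le> A" and D: "0 < D"
    and H0: "\<And>S. finite S \<Longrightarrow> (\<Sum>n\<in>S. (c n)^2) \<le> D"
    and H1: "\<And>N S. 1 \<le> N \<Longrightarrow> finite S \<Longrightarrow> S \<subseteq> {N..} \<Longrightarrow> (\<Sum>n\<in>S. (c n)^2) \<le> A / real N"
  shows "summable (\<lambda>n. \<bar>c n\<bar> powr p) \<and> (\<Sum>n. \<bar>c n\<bar> powr p) \<le> Phi p A D"
proof -
  have c2: "(c n)^2 \<le> D" for n using H0[of "{n}"] by simp
  have part: "(\<Sum>n<M. \<bar>c n\<bar> powr p) \<le> Phi p A D" for M
  proof (cases "2 \<le> p")
    case True
    have tb: "\<bar>c n\<bar> powr p \<le> (c n)^2 * D powr ((p-2)/2)" for n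
    proof (cases "c n = 0")
      case True then show ?thesis by simp
    next
      case False
      have "\<bar>c n\<bar> powr p = \<bar>c n\<bar> powr (2 + (p - 2))" by simp
      also have "\<dots> = \<bar>c n\<bar> powr 2 * \<bar>c n\<bar> powr (p - 2)" using False by (simp only: powr_add)
      also have "\<dots> = (c n)^2 * ((c n)^2) powr ((p-2)/2)" by (simp add: abs_powr_sq[of "c n" "p - 2"])
      also have "\<dots> \<le> (c n)^2 * D powr ((p-2)/2)"
        using True c2[of n] by (intro mult_left_mono powr_mono2) auto
      finally show ?thesis .
    qed
    have "(\<Sum>n<M. \<bar>c n\<bar> powr p) \<le> (\<Sum>n<M. (c n)^2 * D powr ((p-2)/2))" by (rule sum_mono) (rule tb)
    also have "\<dots> = (\<Sum>n<M. (c n)^2) * D powr ((p-2)/2)" by (simp add: sum_distrib_right)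
    also have "\<dots> \<le> D * D powr ((p-2)/2)" using H0[of "{..<M}"] by (intro mult_right_mono) auto
    also have "\<dots> = D powr (p/2)"
    proof -
      have "p/2 = 1 + (p-2)/2" by (simp add: field_simps)
      then have "D powr (p/2) = D powr 1 * D powr ((p-2)/2)" by (simp only: powr_add)
      then show ?thesis using D by simp
    qed
    finally show ?thesis using True by (simp add: Phi_def)
  next
    case False
    then have p2: "p < 2" by simp
    have "(\<Sum>n<M. \<bar>c n\<bar> powr p) \<le> (\<Sum>n<Suc M. \<bar>c n\<bar> powr p)" by simp
    also have "{..<Suc M} = insert 0 {1..M}" by auto
    also have "(\<Sum>n\<in>insert 0 {1..M}. \<bar>c n\<bar> powr p) = \<bar>c 0\<bar> powr p + (\<Sum>n\<in>{1..M}. \<bar>c n\<bar> powr p)"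
      by (subst sum.insert) auto
    also have "\<dots> \<le> D powr (p/2) + ((p/2) * D powr (th p / 2) * A powr (1 - th p) * Z1 p + ((2-p)/2) * D powr (th p * qq p / 2) * Z2 p)"
      using c0_bound[OF c2[of 0]] p lp_partial_small[OF p p2 A D H0 H1, of M] by (intro add_mono) auto
    also have "\<dots> = Phi p A D" using False by (simp add: Phi_def)
    finally show ?thesis .
  qed
  have sm: "summable (\<lambda>n. \<bar>c n\<bar> powr p)" by (rule summableI_nonneg_bounded[OF _ part]) simp
  moreover have "(\<Sum>n. \<bar>c n\<bar> powr p) \<le> Phi p A D" by (rule suminf_le_const[OF sm part])
  ultimately show ?thesis by blast
qed

lemma powr_to0: "0 < k \<Longrightarrow> ((\<lambda>D::real. D powr k) \<longlongrightarrow> 0) (at_right 0)"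
  by (rule tendsto_zero_powrI) (auto intro!: tendsto_ident_at eventually_at_rightI[of 0 1])

lemma Phi_tendsto:
  assumes p: "1 < p"
  shows "((\<lambda>D. Phi p A D) \<longlongrightarrow> 0) (at_right 0)"
proof (cases "2 \<le> p")
  case True
  then show ?thesis using p by (simp add: Phi_def powr_to0)
next
  case False
  have th: "th p > 0" using p by (simp add: th_def field_simps)
  have q: "qq p > 0" using p False by (simp add: qq_def)
  have "((\<lambda>D. D powr (p/2) + (p/2) * D powr (th p / 2) * A powr (1 - th p) * Z1 p
       + ((2-p)/2) * D powr (th p * qq p / 2) * Z2 p) \<longlongrightarrow> 0 + (p/2) * 0 * A powr (1 - th p) * Z1 p + ((2-p)/2) * 0 * Z2 p) (at_right 0)"
    using p th q by (intro tendsto_intros powr_to0) auto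
  then show ?thesis using False by (simp add: Phi_def)
qed

context jac begin

lemma w_borel: "w \<in> borel_measurable borel"
  unfolding w_def jacobi_weight_def[abs_def] by measurable

lemma lint_eq:
  assumes hb: "h \<in> borel_measurable borel" and ok: "ok h" and sub: "{c..d} \<subseteq> {-1..1}"
  shows "(LINT x:{c..d}|lborel. h x * w x) = integral {c..d} (\<lambda>x. h x * w x)"
proof -
  have ai: "(\<lambda>x. h x * w x) absolutely_integrable_on {c..d}"
    by (rule absolutely_integrable_on_subinterval[OF ok_aint[OF ok] sub])
  then have "integrable lebesgue (\<lambda>x. indicator {c..d} x *\<^sub>R (h x * w x))"
    unfolding set_integrable_def .
  moreover have "(\<lambda>x. indicator {c..d} x *\<^sub>R (h x * w x)) \<in> borel_measurable lborel"
    using hb w_borel by measurable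
  ultimately have "integrable lborel (\<lambda>x. indicator {c..d} x *\<^sub>R (h x * w x))"
    using integrable_completion by blast
  then have "set_integrable lborel {c..d} (\<lambda>x. h x * w x)" unfolding set_integrable_def .
  then show ?thesis by (rule set_borel_integral_eq_integral(2))
qed

lemma PP_borel: "PP n \<in> borel_measurable borel"
  by (rule borel_measurable_continuous_onI[OF PP_cont])

lemma pn_borel: "pn n \<in> borel_measurable borel"
  by (rule borel_measurable_continuous_onI[OF pn_cont])

lemma jacobi_p_eq: "jacobi_p a b n = pn n"
proof -
  have "(LINT y:{-1..1}|lborel. (PP n y)^2 * w y) = integral {-1..1} (\<lambda>y. (PP n y)^2 * w y)"
  proof (rule lint_eq)
    note PP_borel[measurable]
    show "(\<lambda>y. (PP n y)^2) \<in> borel_measurable borel" by measurable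
    show "ok (\<lambda>y. (PP n y)^2)" unfolding power2_eq_square by (intro ok_mult ok_PP)
  qed auto
  also have "\<dots> = hn n" unfolding hn_def ip_def by (simp add: power2_eq_square)
  finally have "(LINT y:{-1..1}|lborel. (jacobi_P a b n y)^2 * jacobi_weight a b y) = hn n"
    by (simp add: PP_def w_def)
  then show ?thesis unfolding jacobi_p_def[abs_def] pn_def[abs_def] PP_def
    by (simp add: fun_eq_iff field_simps)
qed

end

context jacf begin

definition cf :: "real \<Rightarrow> nat \<Rightarrow> real" where "cf r n = ip one (GG r) (pn n)"

lemma T_eq:
  assumes K: "K = {n. f n \<noteq> 0}" and r: "0 \<le> r" "r \<le> 1"
  shows "jacobi_T a b r f n - f n = - cf r n"
proof -
  have sub: "{-r..r} \<subseteq> {-1..1}" using r by auto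
  have okpp: "ok (\<lambda>x. pn m x * pn n x)" for m by (intro ok_mult ok_pn)
  have Lm: "(LINT x:{-r..r}|lborel. jacobi_p a b m x * jacobi_p a b n x * jacobi_weight a b x)
      = integral {-r..r} (\<lambda>x. pn m x * pn n x * w x)" for m
    unfolding jacobi_p_eq w_def[symmetric]
    by (rule lint_eq[OF _ okpp sub]) (intro borel_measurable_times pn_borel)
  have intm: "(\<lambda>x. pn m x * pn n x * w x) integrable_on {-r..r}" for m
    by (rule integrable_on_subinterval[OF ok_int[OF okpp] sub])
  have "jacobi_T a b r f n = (\<Sum>m. f m * integral {-r..r} (\<lambda>x. pn m x * pn n x * w x))"
    unfolding jacobi_T_def Lm ..
  also have "\<dots> = (\<Sum>m\<in>K. f m * integral {-r..r} (\<lambda>x. pn m x * pn n x * w x))"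
    by (rule suminf_finite[OF finK]) (auto simp: K)
  also have "\<dots> = (\<Sum>m\<in>K. integral {-r..r} (\<lambda>x. f m * (pn m x * pn n x * w x)))"
    by simp
  also have "\<dots> = integral {-r..r} (\<lambda>x. \<Sum>m\<in>K. f m * (pn m x * pn n x * w x))"
    by (rule integral_sum[symmetric]) (use finK integrable_cmul[OF intm] in auto)
  also have "\<dots> = integral {-r..r} (\<lambda>x. FF x * pn n x * w x)"
    by (rule integral_cong) (simp add: FF_def sum_distrib_left sum_distrib_right mult_ac)
  also have "\<dots> = integral {-1..1} (\<lambda>x. if x \<in> {-r..r} then FF x * pn n x * w x else 0)"
  proof -
    have E: "{-r..r} \<inter> {-1..1} = {-r..r}" using sub by blast
    show ?thesis unfolding integral_restrict_Int E ..
  qed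
  finally have T: "jacobi_T a b r f n = integral {-1..1} (\<lambda>x. if x \<in> {-r..r} then FF x * pn n x * w x else 0)" .
  have fn: "f n = ip one FF (pn n)"
  proof -
    have "ip one FF (pn n) = (\<Sum>m\<in>K. ip one (\<lambda>x. f m * pn m x) (pn n))"
      unfolding FF_def[abs_def] by (rule ip_sum_left) (auto intro!: finK ok_one ok_cmult ok_pn)
    also have "\<dots> = (\<Sum>m\<in>K. f m * (if m = n then 1 else 0))"
      by (simp add: ip_cmult_left orthonormal)
    also have "\<dots> = f n" using finK by (auto simp: K if_distrib cong: if_cong)
    finally show ?thesis by simp
  qed
  have okFF: "ok FF" by (rule ok_cont[OF FF_cont])
  have i1: "(\<lambda>x. if x \<in> {-r..r} then FF x * pn n x * w x else 0) integrable_on {-1..1}"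
  proof -
    have E: "{-r..r} \<inter> {-1..1} = {-r..r}" using sub by blast
    show ?thesis unfolding integrable_restrict_Int E
      by (rule integrable_on_subinterval[OF ok_int[OF ok_mult[OF okFF ok_pn]] sub])
  qed
  have i2: "(\<lambda>x. FF x * pn n x * 1 * w x) integrable_on {-1..1}" by (rule ip_int[OF ok_one okFF ok_pn])
  have "jacobi_T a b r f n - f n = integral {-1..1} (\<lambda>x. (if x \<in> {-r..r} then FF x * pn n x * w x else 0) - FF x * pn n x * 1 * w x)"
    unfolding T fn ip_def by (rule integral_diff[OF i1 i2, symmetric])
  also have "\<dots> = integral {-1..1} (\<lambda>x. - (GG r x * pn n x * 1 * w x))"
    by (rule integral_cong) (auto simp: GG_def)
  also have "\<dots> = - cf r n" unfolding cf_def ip_def by simp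
  finally show ?thesis .
qed

lemma H0:
  assumes r: "0 \<le> r" "r \<le> 1" and S: "finite S"
  shows "(\<Sum>n\<in>S. (cf r n)^2) \<le> 4 * BF^2 * Cw * sqrt (1 - r)"
  unfolding cf_def using bessel_pn[OF S ok_GG[of r]] C1[OF r] by linarith

lemma H1:
  assumes r: "1/2 \<le> r" "r < 1" and N: "1 \<le> N" and S: "finite S" "S \<subseteq> {N..}"
  shows "(\<Sum>n\<in>S. (cf r n)^2) \<le> Atail / real N"
  unfolding cf_def by (rule tail_bound[OF r N S])

lemma Atail_nonneg: "Atail \<ge> 0"
  unfolding Atail_def using M0_nonneg Cw_pos Cw2_pos by simp

end

theorem lemma3p2:
  fixes a b p :: real and f :: "nat \<Rightarrow> real"
  assumes "a \<ge> -1/2" and "b \<ge> -1/2" and "1 < p"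
    and "finite {n. f n \<noteq> 0}"
  shows "(\<forall>\<^sub>F r in at_left 1.
            summable (\<lambda>n. \<bar>jacobi_T a b r f n - f n\<bar> powr p))
       \<and> ((\<lambda>r. lp_norm p (\<lambda>n. jacobi_T a b r f n - f n)) \<longlongrightarrow> 0) (at_left 1)"
proof -
  interpret J: jacf a b f "{n. f n \<noteq> 0}" using assms by unfold_locales auto
  define A0 where "A0 = 4 * J.BF^2 * J.Cw"
  have A0: "A0 > 0" using J.BF J.Cw_pos by (simp add: A0_def)
  define D where "D r = A0 * sqrt (1 - r)" for r
  have key: "summable (\<lambda>n. \<bar>jacobi_T a b r f n - f n\<bar> powr p)
      \<and> (\<Sum>n. \<bar>jacobi_T a b r f n - f n\<bar> powr p) \<le> Phi p J.Atail (D r)"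
    if r: "1/2 < r" "r < 1" for r
  proof -
    have eq: "\<bar>jacobi_T a b r f n - f n\<bar> = \<bar>J.cf r n\<bar>" for n
      using J.T_eq[OF refl, of r n] r by simp
    have Dp: "0 < D r" using A0 r by (simp add: D_def)
    have "summable (\<lambda>n. \<bar>J.cf r n\<bar> powr p) \<and> (\<Sum>n. \<bar>J.cf r n\<bar> powr p) \<le> Phi p J.Atail (D r)"
    proof (rule lp_small[OF assms(3) J.Atail_nonneg Dp])
      fix S :: "nat set" assume "finite S"
      then show "(\<Sum>n\<in>S. (J.cf r n)^2) \<le> D r" using J.H0[of r S] r by (simp add: D_def A0_def)
    next
      fix N :: nat and S :: "nat set" assume "1 \<le> N" "finite S" "S \<subseteq> {N..}"
      then show "(\<Sum>n\<in>S. (J.cf r n)^2) \<le> J.Atail / real N" using J.H1[of r N S] r by simp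
    qed
    then show ?thesis unfolding eq .
  qed
  have ev: "\<forall>\<^sub>F r in at_left (1::real). 1/2 < r \<and> r < 1"
    using eventually_at_left_real[of "1/2" "1::real"] by (rule eventually_mono) auto
  have part1: "\<forall>\<^sub>F r in at_left 1. summable (\<lambda>n. \<bar>jacobi_T a b r f n - f n\<bar> powr p)"
    using ev by (rule eventually_mono) (use key in blast)
  have Dlim: "(D \<longlongrightarrow> 0) (at_left 1)"
  proof -
    have "((\<lambda>r. A0 * sqrt (1 - r)) \<longlongrightarrow> A0 * sqrt (1 - 1)) (at_left (1::real))"
      by (intro tendsto_intros)
    then show ?thesis by (simp add: D_def[abs_def])
  qed
  have Dfl: "filterlim D (at_right 0) (at_left 1)"
    unfolding filterlim_at
  proof
    show "\<forall>\<^sub>F x in at_left 1. D x \<in> {0<..} \<and> D x \<noteq> 0"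
      using ev by (rule eventually_mono) (use A0 in \<open>auto simp: D_def\<close>)
  qed (rule Dlim)
  have Plim: "((\<lambda>r. Phi p J.Atail (D r)) \<longlongrightarrow> 0) (at_left 1)"
    by (rule filterlim_compose[OF Phi_tendsto[OF assms(3)] Dfl])
  have Pnn: "\<forall>\<^sub>F r in at_left 1. 0 \<le> Phi p J.Atail (D r)"
    using ev
  proof (rule eventually_mono)
    fix r :: real assume r: "1/2 < r \<and> r < 1"
    have "0 \<le> (\<Sum>n. \<bar>jacobi_T a b r f n - f n\<bar> powr p)"
      using key r by (intro suminf_nonneg) auto
    moreover have "(\<Sum>n. \<bar>jacobi_T a b r f n - f n\<bar> powr p) \<le> Phi p J.Atail (D r)" using key r by blast
    ultimately show "0 \<le> Phi p J.Atail (D r)" by linarith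
  qed
  have Plim2: "((\<lambda>r. Phi p J.Atail (D r) powr (1/p)) \<longlongrightarrow> 0) (at_left 1)"
    by (rule tendsto_zero_powrI[OF Plim tendsto_const Pnn]) (use assms(3) in simp)
  have part2: "((\<lambda>r. lp_norm p (\<lambda>n. jacobi_T a b r f n - f n)) \<longlongrightarrow> 0) (at_left 1)"
  proof (rule tendsto_sandwich[OF _ _ tendsto_const Plim2])
    show "\<forall>\<^sub>F r in at_left 1. 0 \<le> lp_norm p (\<lambda>n. jacobi_T a b r f n - f n)"
      by (simp add: lp_norm_def)
    show "\<forall>\<^sub>F r in at_left 1. lp_norm p (\<lambda>n. jacobi_T a b r f n - f n) \<le> Phi p J.Atail (D r) powr (1/p)"
      using ev
    proof (rule eventually_mono)
      fix r :: real assume r: "1/2 < r \<and> r < 1"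
      have "0 \<le> (\<Sum>n. \<bar>jacobi_T a b r f n - f n\<bar> powr p)"
        using key r by (intro suminf_nonneg) auto
      then show "lp_norm p (\<lambda>n. jacobi_T a b r f n - f n) \<le> Phi p J.Atail (D r) powr (1/p)"
        unfolding lp_norm_def using key r assms(3) by (intro powr_mono2) auto
    qed
  qed
  show ?thesis using part1 part2 by blast
qed

end
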